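(* Let $z_\delta^{(n)}=h(v_\delta^{(n)})$. There exists a constant $C_{17}>0$ independent of $n\in\mathbb{N}$ and $\delta>0$ such that $$\left|\int_0^T\!\!\int_0^1(\partial_t z_\delta^{(n)})\,\eta\,dx\,dt\right|\le C_{17}|\eta|_{L^2(0,T;X)}\qquad\text{for all }\eta\in L^2(0,T;X).$$
   Context: $Q(T)=(0,T)\times(0,1)$, $H=L^2(0,1)$, $X=H^1(0,1)$, $T>0$. Assume $h\in C^2(\mathbb{R})$ with $\delta_h\le h'\le C_h$, $|h''|\le C_h$; $b\in C^2(\mathbb{R})$ with $\delta_b\le b\le C_b$, $|b'|,|b''|\le C_b$ (positive constants); $p\in L^2(0,T;H)$; $v_0\in H$. Extend $p$ by zero to $\mathbb{R}^2$ and let $\rho_\delta=J^{(2)}_\delta\ast p$ ($J^{(2)}_\delta$ a standard mollifier on $\mathbb{R}^2$). For $n\in\mathbb{N}$ let $\Delta x^{(n)}=1/n$, $\chi_i^{(n)}$ the characteristic function of $[(i-1)\Delta x^{(n)},i\Delta x^{(n)})$, $\rho_{\delta,i}^{(n)}(t)=\frac1{\Delta x^{(n)}}\int_{(i-1)\Delta x^{(n)}}^{i\Delta x^{(n)}}\rho_\delta(t,\xi)d\xi$, $v_{0,i}^{(n)}=\frac1{\Delta x^{(n)}}\int_{(i-1)\Delta x^{(n)}}^{i\Delta x^{(n)}}v_0(\xi)d\xi$. Let $(v_{\delta,1}^{(n)},\dots,v_{\delta,n}^{(n)})$ be the unique $C^1$ solution of (writing $v_i=v_{\delta,i}^{(n)}$,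 $\rho_i=\rho_{\delta,i}^{(n)}$, $\Delta x=\Delta x^{(n)}$, $a_i=\frac{v_{i+1}-v_i}{\Delta x}+b(\frac{v_i+v_{i+1}}2)\rho_i$, $i=1,\dots,n-1$): $h'(v_1)v_1'=a_1/\Delta x$; $h'(v_i)v_i'=(a_i-a_{i-1})/\Delta x$ for $2\le i\le n-1$; $h'(v_n)v_n'=-a_{n-1}/\Delta x$; $v_i(0)=v_{0,i}^{(n)}$. Set $v_\delta^{(n)}(t,x)=\sum_{i=1}^n\chi_i^{(n)}(x)v_{\delta,i}^{(n)}(t)$ on $Q(T)$. *)

theory Defs
  imports "HOL-Analysis.Analysis"
begin

definition Qset :: "real \<Rightarrow> (real \<times> real) set" where
  "Qset T = {0<..<T} \<times> {0<..<1}"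

definition bump :: "real \<times> real \<Rightarrow> real" where
  "bump y = (if norm y < 1 then exp (1 / ((norm y)\<^sup>2 - 1)) else 0)"

definition stdJ :: "real \<times> real \<Rightarrow> real" where
  "stdJ y = bump y / (\<integral>z. bump z \<partial>lborel)"

definition Jdelta :: "real \<Rightarrow> real \<times> real \<Rightarrow> real" where
  "Jdelta \<delta> y = stdJ ((1 / \<delta>) *\<^sub>R y) / \<delta>\<^sup>2"

definition rho_delta :: "real \<Rightarrow> (real \<times> real \<Rightarrow> real) \<Rightarrow> real \<Rightarrow> real \<times> real \<Rightarrow> real" where
  "rho_delta T p \<delta> q = (\<integral>y. Jdelta \<delta> (q - y) * (indicator (Qset T) y * p y) \<partial>lborel)"

definition dx :: "nat \<Rightarrow> real" where
  "dx n = 1 / real n"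

definition cell :: "nat \<Rightarrow> nat \<Rightarrow> real set" where
  "cell n i = {(real i - 1) * dx n ..< real i * dx n}"

definition cell_avg :: "nat \<Rightarrow> (real \<Rightarrow> real) \<Rightarrow> nat \<Rightarrow> real" where
  "cell_avg n f i = (1 / dx n) * (\<integral>\<xi>. indicator (cell n i) \<xi> * f \<xi> \<partial>lborel)"

text \<open>Discrete flux a_i for 1 <= i <= n-1; set to 0 for i = 0 and i = n, so that the
  three equations of the scheme read uniformly h'(v_i) v_i' = (a_i - a_(i-1))/dx.\<close>
definition flux :: "(real \<Rightarrow> real) \<Rightarrow> nat \<Rightarrow> (nat \<Rightarrow> real \<Rightarrow> real) \<Rightarrow> (nat \<Rightarrow> real \<Rightarrow> real)
                    \<Rightarrow> nat \<Rightarrow> real \<Rightarrow> real" where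
  "flux b n v r i t =
     (if 1 \<le> i \<and> i \<le> n - 1
      then (v (i + 1) t - v i t) / dx n + b ((v i t + v (i + 1) t) / 2) * r i t
      else 0)"

definition is_scheme_solution ::
  "real \<Rightarrow> (real \<Rightarrow> real) \<Rightarrow> (real \<Rightarrow> real) \<Rightarrow> (real \<times> real \<Rightarrow> real) \<Rightarrow> (real \<Rightarrow> real)
   \<Rightarrow> nat \<Rightarrow> real \<Rightarrow> (nat \<Rightarrow> real \<Rightarrow> real) \<Rightarrow> (nat \<Rightarrow> real \<Rightarrow> real) \<Rightarrow> bool" where
  "is_scheme_solution T h' b p v0 n \<delta> v vd \<longleftrightarrow>
     (let r = (\<lambda>i t. cell_avg n (\<lambda>\<xi>. rho_delta T p \<delta> (t, \<xi>)) i) in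
      \<forall>i\<in>{1..n}.
        (\<forall>t\<in>{0..T}. (v i has_real_derivative vd i t) (at t within {0..T})) \<and>
        continuous_on {0..T} (vd i) \<and>
        v i 0 = cell_avg n v0 i \<and>
        (\<forall>t\<in>{0..T}. h' (v i t) * vd i t = (flux b n v r i t - flux b n v r (i - 1) t) / dx n))"

definition vpc :: "nat \<Rightarrow> (nat \<Rightarrow> real \<Rightarrow> real) \<Rightarrow> real \<Rightarrow> real \<Rightarrow> real" where
  "vpc n v t x = (\<Sum>i=1..n. indicator (cell n i) x * v i t)"

text \<open>C_c^infinity(0,1) test functions: phi k is the k-th derivative of phi 0.\<close>
definition test_fun :: "(nat \<Rightarrow> real \<Rightarrow> real) \<Rightarrow> bool" where
  "test_fun \<phi> \<longleftrightarrow> (\<forall>k x. (\<phi> k has_real_derivative \<phi> (Suc k) x) (at x)) \<and>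
                    (\<exists>a b. 0 < a \<and> a \<le> b \<and> b < 1 \<and> (\<forall>x. x \<notin> {a..b} \<longrightarrow> \<phi> 0 x = 0))"

definition weak_deriv01 :: "(real \<Rightarrow> real) \<Rightarrow> (real \<Rightarrow> real) \<Rightarrow> bool" where
  "weak_deriv01 u u' \<longleftrightarrow>
     (\<forall>\<phi>. test_fun \<phi> \<longrightarrow>
        (\<integral>x. indicator {0<..<1} x * (u x * \<phi> 1 x) \<partial>lborel) =
        - (\<integral>x. indicator {0<..<1} x * (u' x * \<phi> 0 x) \<partial>lborel))"

text \<open>eta in L^2(0,T;X), X = H^1(0,1), with eta_x its weak x-derivative:
  eta, eta_x in L^2(Q(T)) and for a.e. t, eta_x(t,.) is the weak derivative of eta(t,.).\<close>
definition in_L2X :: "real \<Rightarrow> (real \<times> real \<Rightarrow> real) \<Rightarrow> (real \<times> real \<Rightarrow> real) \<Rightarrow> bool" where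
  "in_L2X T \<eta> \<eta>x \<longleftrightarrow>
     \<eta> \<in> borel_measurable borel \<and> \<eta>x \<in> borel_measurable borel \<and>
     set_integrable lborel (Qset T) (\<lambda>q. (\<eta> q)\<^sup>2) \<and>
     set_integrable lborel (Qset T) (\<lambda>q. (\<eta>x q)\<^sup>2) \<and>
     (AE t in lborel. t \<in> {0<..<T} \<longrightarrow> weak_deriv01 (\<lambda>x. \<eta> (t, x)) (\<lambda>x. \<eta>x (t, x)))"

definition L2X_norm :: "real \<Rightarrow> (real \<times> real \<Rightarrow> real) \<Rightarrow> (real \<times> real \<Rightarrow> real) \<Rightarrow> real" where
  "L2X_norm T \<eta> \<eta>x = sqrt (\<integral>q. indicator (Qset T) q * ((\<eta> q)\<^sup>2 + (\<eta>x q)\<^sup>2) \<partial>lborel)"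

end

theory Submission
  imports Defs "HOL-Computational_Algebra.Polynomial"
begin

coinductive cinf :: "(real \<Rightarrow> real) \<Rightarrow> bool" where
  cinfI: "(\<And>x. (f has_real_derivative f' x) (at x)) \<Longrightarrow> cinf f' \<Longrightarrow> cinf f"

definition cd :: "(real \<Rightarrow> real) \<Rightarrow> (real \<Rightarrow> real)" where
  "cd f = (SOME f'. (\<forall>x. (f has_real_derivative f' x) (at x)) \<and> cinf f')"

lemma cd: assumes "cinf f" shows "\<And>x. (f has_real_derivative cd f x) (at x)" "cinf (cd f)"
proof -
  have "\<exists>f'. (\<forall>x. (f has_real_derivative f' x) (at x)) \<and> cinf f'"
    using assms by (cases rule: cinf.cases) auto
  then have "(\<forall>x. (f has_real_derivative cd f x) (at x)) \<and> cinf (cd f)"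
    unfolding cd_def by (rule someI_ex)
  then show "\<And>x. (f has_real_derivative cd f x) (at x)" "cinf (cd f)" by auto
qed

lemma cinf_const: "cinf (\<lambda>x. c)"
proof -
  have "\<exists>c. f = (\<lambda>x. c)" if "f = (\<lambda>x. c)" for f using that by blast
  show ?thesis
    by (rule cinf.coinduct[where X="\<lambda>f. \<exists>c. f = (\<lambda>x. c)"])
       (auto intro!: exI[of _ "\<lambda>x. 0"] derivative_eq_intros)
qed

lemma cinf_sp:
  assumes "\<forall>(f,g)\<in>set xs. cinf f \<and> cinf g"
  shows "cinf (\<lambda>x. \<Sum>(f,g)\<leftarrow>xs. f x * g x)"
proof -
  define R where "R h \<longleftrightarrow> (\<exists>xs. (\<forall>(f,g)\<in>set xs. cinf f \<and> cinf g) \<and> h = (\<lambda>x. \<Sum>(f,g)\<leftarrow>xs. f x * g x))" for h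
  have der: "((\<lambda>x. \<Sum>(f,g)\<leftarrow>xs. f x * g x) has_real_derivative
      (\<Sum>(f,g)\<leftarrow>concat (map (\<lambda>(f,g). [(cd f, g), (f, cd g)]) xs). f x * g x)) (at x)"
    if "\<forall>(f,g)\<in>set xs. cinf f \<and> cinf g" for xs x
    using that
  proof (induction xs)
    case Nil then show ?case by simp
  next
    case (Cons a xs)
    obtain f g where a: "a = (f,g)" by force
    with Cons have fg: "cinf f" "cinf g" by auto
    have "((\<lambda>x. f x * g x + (\<Sum>(f,g)\<leftarrow>xs. f x * g x)) has_real_derivative
       (cd f x * g x + f x * cd g x) + (\<Sum>(f,g)\<leftarrow>concat (map (\<lambda>(f,g). [(cd f, g), (f, cd g)]) xs). f x * g x)) (at x)"
      using DERIV_add[OF DERIV_mult[OF cd(1)[OF fg(1)] cd(1)[OF fg(2)]] Cons.IH] Cons.prems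
      by (auto simp: algebra_simps)
    then show ?case by (simp add: a algebra_simps)
  qed
  show ?thesis
  proof (rule cinf.coinduct[where X=R])
    show "R (\<lambda>x. \<Sum>(f,g)\<leftarrow>xs. f x * g x)" using assms unfolding R_def by blast
  next
    fix h assume "R h"
    then obtain xs where xs: "\<forall>(f,g)\<in>set xs. cinf f \<and> cinf g" and h: "h = (\<lambda>x. \<Sum>(f,g)\<leftarrow>xs. f x * g x)"
      unfolding R_def by blast
    have "\<forall>(f,g)\<in>set (concat (map (\<lambda>(f,g). [(cd f, g), (f, cd g)]) xs)). cinf f \<and> cinf g"
      using xs cd by fastforce
    then show "\<exists>f f'. h = f \<and> (\<forall>x. (f has_real_derivative f' x) (at x)) \<and> (R f' \<or> cinf f')"
      using der[OF xs] h unfolding R_def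
      by (intro exI[of _ h] exI[of _ "\<lambda>x. \<Sum>(f,g)\<leftarrow>concat (map (\<lambda>(f,g). [(cd f, g), (f, cd g)]) xs). f x * g x"]) blast
  qed
qed

lemma cinf_mult: "cinf f \<Longrightarrow> cinf g \<Longrightarrow> cinf (\<lambda>x. f x * g x)"
  using cinf_sp[of "[(f,g)]"] by simp

lemma cinf_add: "cinf f \<Longrightarrow> cinf g \<Longrightarrow> cinf (\<lambda>x. f x + g x)"
  using cinf_sp[of "[(f,\<lambda>x. 1),(g,\<lambda>x. 1)]"] cinf_const by simp

lemma cinf_cmult: "cinf f \<Longrightarrow> cinf (\<lambda>x. c * f x)"
  using cinf_mult[OF cinf_const] .

lemma cinf_diff: "cinf f \<Longrightarrow> cinf g \<Longrightarrow> cinf (\<lambda>x. f x - g x)"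
  using cinf_add[of f "\<lambda>x. (-1) * g x"] cinf_cmult[of g "-1"] by simp

lemma cinf_affine:
  assumes "cinf f" shows "cinf (\<lambda>x. f (c * x + d))"
proof -
  define R where "R h \<longleftrightarrow> (\<exists>f k. cinf f \<and> h = (\<lambda>x. k * f (c * x + d)))" for h
  show ?thesis
  proof (rule cinf.coinduct[where X=R])
    show "R (\<lambda>x. f (c * x + d))" unfolding R_def using assms by (intro exI[of _ f] exI[of _ 1]) auto
  next
    fix h assume "R h"
    then obtain f k where f: "cinf f" and h: "h = (\<lambda>x. k * f (c * x + d))" unfolding R_def by blast
    have "(h has_real_derivative (k * c) * cd f (c * x + d)) (at x)" for x
    proof -
      have "((\<lambda>x. k * f (c * x + d)) has_real_derivative k * (cd f (c * x + d) * (c * 1 + 0))) (at x)"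
        by (intro DERIV_cmult DERIV_chain2[OF cd(1)[OF f]] DERIV_add DERIV_cmult DERIV_ident DERIV_const)
      then show ?thesis by (simp add: h algebra_simps)
    qed
    moreover have "R (\<lambda>x. (k * c) * cd f (c * x + d))" unfolding R_def using cd(2)[OF f] by blast
    ultimately show "\<exists>f f'. h = f \<and> (\<forall>x. (f has_real_derivative f' x) (at x)) \<and> (R f' \<or> cinf f')"
      by (intro exI[of _ h] exI[of _ "\<lambda>x. k * c * cd f (c * x + d)"]) auto
  qed
qed

lemma cinf_divide:
  assumes w: "cinf w" and g: "cinf g" and nz: "\<And>x. g x \<noteq> 0"
  shows "cinf (\<lambda>x. w x / g x)"
proof -
  define R where "R h \<longleftrightarrow> (\<exists>w k. cinf w \<and> h = (\<lambda>x. w x / g x ^ k))" for h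
  show ?thesis
  proof (rule cinf.coinduct[where X=R])
    show "R (\<lambda>x. w x / g x)" unfolding R_def using w by (intro exI[of _ w] exI[of _ 1]) auto
  next
    fix h assume "R h"
    then obtain w k where w: "cinf w" and h: "h = (\<lambda>x. w x / g x ^ k)" unfolding R_def by blast
    define w' where "w' = (\<lambda>x. cd w x * g x - real k * w x * cd g x)"
    have "(h has_real_derivative w' x / g x ^ Suc k) (at x)" for x
    proof -
      have "((\<lambda>x. w x / g x ^ k) has_real_derivative
         (cd w x * g x ^ k - w x * (real k * (cd g x * g x ^ (k - Suc 0)))) / (g x ^ k * g x ^ k)) (at x)"
        using nz[of x] DERIV_power[OF cd(1)[OF g], where n=k]
        by (intro DERIV_divide cd(1)[OF w]) auto
      moreover have "(cd w x * g x ^ k - w x * (real k * (cd g x * g x ^ (k - Suc 0)))) / (g x ^ k * g x ^ k)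
          = w' x / g x ^ Suc k"
      proof (cases k)
        case 0 then show ?thesis using nz[of x] by (simp add: w'_def)
      next
        case (Suc m)
        then show ?thesis using nz[of x] unfolding w'_def
          by (simp add: field_simps power_add[symmetric])
      qed
      ultimately show ?thesis by (simp add: h)
    qed
    moreover have "cinf w'" unfolding w'_def
      by (intro cinf_diff cinf_mult cd w g cinf_const)
    then have "R (\<lambda>x. w' x / g x ^ Suc k)" unfolding R_def by blast
    ultimately show "\<exists>f f'. h = f \<and> (\<forall>x. (f has_real_derivative f' x) (at x)) \<and> (R f' \<or> cinf f')"
      by (intro exI[of _ h] exI[of _ "\<lambda>x. w' x / g x ^ Suc k"]) auto
  qed
qed

definition fl :: "real poly \<Rightarrow> real \<Rightarrow> real" where
  "fl Q x = (if x > 0 then poly Q (1 / x) * exp (- (1 / x)) else 0)"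

lemma poly_div_exp_0: "((\<lambda>y::real. poly R y / exp y) \<longlongrightarrow> 0) at_top"
proof -
  have "((\<lambda>y. \<Sum>i\<le>degree R. coeff R i * (y ^ i / exp y)) \<longlongrightarrow> 0) at_top"
    by (rule tendsto_null_sum) (rule tendsto_mult_right_zero tendsto_mult_left_zero, rule tendsto_power_div_exp_0)
  then show ?thesis by (simp add: poly_altdef sum_divide_distrib)
qed

lemma fl_deriv0: "(fl Q has_real_derivative 0) (at 0)"
proof -
  have "((\<lambda>x. (fl Q x - fl Q 0) / (x - 0)) \<longlongrightarrow> 0) (at_left 0)"
  proof (rule tendsto_eventually)
    show "\<forall>\<^sub>F x in at_left 0. (fl Q x - fl Q 0) / (x - 0) = 0"
      unfolding eventually_at_left_field by (auto simp: fl_def intro!: exI[of _ "-1"])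
  qed
  moreover have "((\<lambda>x. (fl Q x - fl Q 0) / (x - 0)) \<longlongrightarrow> 0) (at_right 0)"
    unfolding filterlim_at_right_to_top
  proof (rule Lim_transform_eventually[OF poly_div_exp_0[of "[:0,1:] * Q"]])
    show "\<forall>\<^sub>F x in at_top. poly ([:0, 1:] * Q) x / exp x = (fl Q (inverse x) - fl Q 0) / (inverse x - 0)"
      using eventually_gt_at_top[of 0]
      by eventually_elim (simp add: fl_def exp_minus field_simps)
  qed
  ultimately show ?thesis
    unfolding has_field_derivative_iff filterlim_at_split by auto
qed

lemma fl_deriv: "(fl Q has_real_derivative fl ([:0,0,1:] * (Q - pderiv Q)) x) (at x)"
proof -
  consider "x < 0" | "x = 0" | "x > 0" by linarith
  then show ?thesis
  proof cases
    case 1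
    have "((\<lambda>x. 0) has_real_derivative 0) (at x)" by (rule DERIV_const)
    then have "(fl Q has_real_derivative 0) (at x)"
      by (rule has_field_derivative_transform_within_open[where S="{..<0}"]) (use 1 in \<open>auto simp: fl_def\<close>)
    then show ?thesis using 1 by (simp add: fl_def)
  next
    case 2 then show ?thesis using fl_deriv0[of Q] by (simp add: fl_def)
  next
    case 3
    have "((\<lambda>x. poly Q (1 / x) * exp (- (1 / x))) has_real_derivative
       (poly (pderiv Q) (1 / x) * (- 1 / x^2)) * exp (- (1 / x)) + poly Q (1 / x) * (exp (- (1 / x)) * (1 / x^2))) (at x)"
      using 3
      by (auto intro!: derivative_eq_intros DERIV_chain2[OF poly_DERIV] simp: power2_eq_square)
    then have "(fl Q has_real_derivative
       (poly (pderiv Q) (1 / x) * (- 1 / x^2)) * exp (- (1 / x)) + poly Q (1 / x) * (exp (- (1 / x)) * (1 / x^2))) (at x)"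
      by (rule has_field_derivative_transform_within_open[where S="{0<..}"]) (use 3 in \<open>auto simp: fl_def\<close>)
    moreover have "(poly (pderiv Q) (1 / x) * (- 1 / x^2)) * exp (- (1 / x)) + poly Q (1 / x) * (exp (- (1 / x)) * (1 / x^2))
        = fl ([:0,0,1:] * (Q - pderiv Q)) x"
      using 3 by (simp add: fl_def algebra_simps power2_eq_square divide_simps)
    ultimately show ?thesis by simp
  qed
qed

lemma cinf_fl: "cinf (fl Q)"
proof (rule cinf.coinduct[where X="\<lambda>h. \<exists>Q. h = fl Q"])
  show "\<exists>Q'. fl Q = fl Q'" by blast
next
  fix h assume "\<exists>Q. h = fl Q"
  then obtain Q where "h = fl Q" by blast
  then show "\<exists>f f'. h = f \<and> (\<forall>x. (f has_real_derivative f' x) (at x)) \<and> ((\<exists>Q. f' = fl Q) \<or> cinf f')"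
    using fl_deriv by blast
qed

lemma fl_pos: "x > 0 \<Longrightarrow> fl 1 x > 0" and fl_zero: "x \<le> 0 \<Longrightarrow> fl 1 x = 0"
  by (auto simp: fl_def)

lemma fl_nonneg: "fl 1 x \<ge> 0" by (auto simp: fl_def)

definition stp :: "real \<Rightarrow> real" where
  "stp x = fl 1 x / (fl 1 x + fl 1 (1 - x))"

lemma stp_den: "fl 1 x + fl 1 (1 - x) > 0"
  using fl_pos[of x] fl_pos[of "1-x"] fl_nonneg[of x] fl_nonneg[of "1-x"]
  by (cases "x > 0") auto

lemma cinf_stp: "cinf stp"
proof -
  have "cinf (\<lambda>x. fl 1 (1 - x))" using cinf_affine[OF cinf_fl, of 1 "-1" 1] by simp
  then show ?thesis unfolding stp_def
    proof (intro cinf_divide cinf_fl cinf_add)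
    fix x show "fl 1 x + fl 1 (1 - x) \<noteq> 0" using stp_den[of x] by linarith
  qed simp
qed

lemma stp_0: "x \<le> 0 \<Longrightarrow> stp x = 0" by (simp add: stp_def fl_zero)
lemma stp_1: "x \<ge> 1 \<Longrightarrow> stp x = 1" using stp_den[of x] by (simp add: stp_def fl_zero)
lemma stp_bounds: "0 \<le> stp x" "stp x \<le> 1"
  using stp_den[of x] fl_nonneg[of x] fl_nonneg[of "1-x"] by (auto simp: stp_def divide_simps)

definition Pf :: "real \<Rightarrow> real \<Rightarrow> real \<Rightarrow> real \<Rightarrow> real" where
  "Pf a d e x = stp ((x - a) / e - 1) * stp ((a + d - x) / e - 1)"

definition Phi :: "real \<Rightarrow> real \<Rightarrow> real \<Rightarrow> real \<Rightarrow> real" where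
  "Phi a d e x = integral {a..x} (Pf a d e)"

lemma Pf_cinf: assumes "e > 0" shows "cinf (Pf a d e)"
proof -
  have 1: "\<And>x. stp ((x - a) / e - 1) = stp ((1/e) * x + (- a / e - 1))"
    by (rule arg_cong[where f=stp]) (simp add: diff_divide_distrib)
  have 2: "\<And>x. stp ((a + d - x) / e - 1) = stp ((-1/e) * x + ((a + d) / e - 1))"
    by (rule arg_cong[where f=stp]) (simp add: diff_divide_distrib)
  have "cinf (\<lambda>x. stp ((1/e) * x + (- a / e - 1)) * stp ((-1/e) * x + ((a + d) / e - 1)))"
    by (intro cinf_mult cinf_affine cinf_stp)
  then show ?thesis unfolding Pf_def[abs_def] 1 2 .
qed

lemma cinf_deriv_ex: "cinf f \<Longrightarrow> \<exists>f'. \<forall>x. (f has_real_derivative f' x) (at x)"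
  by (erule cinf.cases) auto

lemma cinf_cont: "cinf f \<Longrightarrow> continuous_on S f"
  by (metis cinf_deriv_ex DERIV_isCont continuous_at_imp_continuous_on)

lemma Pf_cont: "e > 0 \<Longrightarrow> continuous_on S (Pf a d e)"
  using Pf_cinf cinf_cont by blast

lemma Pf_bounds: "0 \<le> Pf a d e x" "Pf a d e x \<le> 1"
  unfolding Pf_def using stp_bounds
  by (auto intro: mult_nonneg_nonneg mult_le_one)

lemma Pf_zero: assumes "e > 0" "x \<le> a + e \<or> x \<ge> a + d - e" shows "Pf a d e x = 0"
proof -
  have "(x - a) / e - 1 \<le> 0 \<or> (a + d - x) / e - 1 \<le> 0"
    using assms by (auto simp: field_simps)
  then show ?thesis unfolding Pf_def using stp_0 by auto
qed

lemma Pf_one: assumes "e > 0" "a + 2 * e \<le> x" "x \<le> a + d - 2 * e" shows "Pf a d e x = 1"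
proof -
  have "(x - a) / e - 1 \<ge> 1" "(a + d - x) / e - 1 \<ge> 1"
    using assms by (auto simp: field_simps)
  then show ?thesis unfolding Pf_def using stp_1 by auto
qed

lemma Pf_integrable: "e > 0 \<Longrightarrow> Pf a d e integrable_on {u..v}"
  by (intro integrable_continuous_interval Pf_cont)

lemma Phi_zero: assumes "e > 0" "y \<le> a + e" shows "Phi a d e y = 0"
proof (cases "y < a")
  case True then show ?thesis by (simp add: Phi_def)
next
  case False
  have "integral {a..y} (Pf a d e) = integral {a..y} (\<lambda>_. 0)"
    using assms by (intro Henstock_Kurzweil_Integration.integral_cong Pf_zero) auto
  then show ?thesis by (simp add: Phi_def)
qed

lemma Phi_const: assumes "e > 0" "a \<le> y" "y \<le> y'" "\<And>z. y \<le> z \<Longrightarrow> z \<le> y' \<Longrightarrow> Pf a d e z = 0"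
  shows "Phi a d e y' = Phi a d e y"
proof -
  have "integral {a..y} (Pf a d e) + integral {y..y'} (Pf a d e) = integral {a..y'} (Pf a d e)"
    by (rule Henstock_Kurzweil_Integration.integral_combine) (use assms in \<open>auto intro: Pf_integrable\<close>)
  moreover have "integral {y..y'} (Pf a d e) = integral {y..y'} (\<lambda>_. 0)"
    using assms by (intro Henstock_Kurzweil_Integration.integral_cong) auto
  ultimately show ?thesis by (simp add: Phi_def)
qed

lemma Phi_deriv: assumes "e > 0" shows "(Phi a d e has_real_derivative Pf a d e x) (at x)"
proof (cases "x < a + e")
  case True
  have "((\<lambda>_. 0) has_real_derivative 0) (at x)" by (rule DERIV_const)
  then have "(Phi a d e has_real_derivative 0) (at x)"
    by (rule has_field_derivative_transform_within_open[where S="{..<a+e}"])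
       (use True assms in \<open>auto intro!: Phi_zero\<close>)
  then show ?thesis using Pf_zero[of e x a d] True assms by simp
next
  case False
  then have x: "x \<in> interior {a..x+1}" using assms by auto
  have "((\<lambda>x. integral {a..x} (Pf a d e)) has_real_derivative Pf a d e x) (at x within {a..x+1})"
    using x interior_subset by (intro integral_has_real_derivative Pf_cont assms) blast
  then show ?thesis unfolding Phi_def[abs_def] at_within_interior[OF x] .
qed

lemma Phi_bounds: assumes "e > 0" "2 * e \<le> d" shows "0 \<le> Phi a d e y" "Phi a d e y \<le> d"
proof -
  have nn: "0 \<le> Phi a d e y" for y
  proof (cases "a \<le> y")
    case True then show ?thesis unfolding Phi_def
      using assms by (intro integral_nonneg Pf_integrable) (auto simp: Pf_bounds)
  next
    case False then show ?thesis by (simp add: Phi_def)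
  qed
  have le: "Phi a d e y \<le> y - a" if "a \<le> y" for y
  proof -
    have "integral {a..y} (Pf a d e) \<le> integral {a..y} (\<lambda>_. 1)"
      using assms by (intro integral_le Pf_integrable) (auto simp: Pf_bounds)
    then show ?thesis using that by (simp add: Phi_def)
  qed
  show "0 \<le> Phi a d e y" by (rule nn)
  show "Phi a d e y \<le> d"
  proof (cases "y \<le> a + d")
    case True
    show ?thesis
    proof (cases "a \<le> y")
      case True then show ?thesis using le[of y] \<open>y \<le> a + d\<close> by linarith
    next
      case False then show ?thesis using assms by (simp add: Phi_def)
    qed
  next
    case False
    then have "Phi a d e y = Phi a d e (a + d)"
      using assms by (intro Phi_const Pf_zero) auto
    then show ?thesis using le[of "a+d"] assms by simp
  qed
qed

definition phif :: "real \<Rightarrow> real \<Rightarrow> real \<Rightarrow> real \<Rightarrow> real" where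
  "phif a d e x = Phi a d e x - Phi a d e (x - d)"

definition gf :: "real \<Rightarrow> real \<Rightarrow> real \<Rightarrow> real \<Rightarrow> real" where
  "gf a d e x = Pf a d e x - Pf a d e (x - d)"

lemma gf_cinf: assumes "e > 0" shows "cinf (gf a d e)"
proof -
  have "cinf (\<lambda>x. Pf a d e (1 * x + - d))" by (intro cinf_affine Pf_cinf assms)
  then have "cinf (\<lambda>x. Pf a d e x - Pf a d e (1 * x + - d))" by (intro cinf_diff Pf_cinf assms)
  then show ?thesis unfolding gf_def[abs_def] by simp
qed

lemma phif_deriv: assumes "e > 0" shows "(phif a d e has_real_derivative gf a d e x) (at x)"
proof -
  have "((\<lambda>x. Phi a d e x - Phi a d e (x - d)) has_real_derivative Pf a d e x - Pf a d e (x - d) * (1 - 0)) (at x)"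
    by (intro DERIV_diff Phi_deriv[OF assms] DERIV_chain2[OF Phi_deriv[OF assms]] DERIV_ident DERIV_const)
  then show ?thesis unfolding phif_def[abs_def] gf_def by simp
qed

lemma cinf_iter: "cinf f \<Longrightarrow> cinf ((cd ^^ j) f)"
  by (induction j) (auto intro: cd(2))

definition tf :: "real \<Rightarrow> real \<Rightarrow> real \<Rightarrow> nat \<Rightarrow> real \<Rightarrow> real" where
  "tf a d e k = (case k of 0 \<Rightarrow> phif a d e | Suc j \<Rightarrow> (cd ^^ j) (gf a d e))"

lemma phif_supp: assumes "e > 0" "2 * e \<le> d" "x \<le> a + e \<or> x \<ge> a + 2 * d - e"
  shows "phif a d e x = 0"
  using assms(3)
proof
  assume x: "x \<le> a + e"
  have "Phi a d e x = 0" by (rule Phi_zero[OF assms(1) x])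
  moreover have "Phi a d e (x - d) = 0" by (rule Phi_zero[OF assms(1)]) (use x assms in linarith)
  ultimately show ?thesis by (simp add: phif_def)
next
  assume x: "x \<ge> a + 2 * d - e"
  have *: "Phi a d e y = Phi a d e (a + d - e)" if y: "y \<ge> a + d - e" for y
  proof (rule Phi_const[OF assms(1)])
    show "a \<le> a + d - e" "a + d - e \<le> y" using assms y by auto
    fix z assume "a + d - e \<le> z" 
    then show "Pf a d e z = 0" by (intro Pf_zero[OF assms(1)]) simp
  qed
  have "x \<ge> a + d - e" "x - d \<ge> a + d - e" using x assms by auto
  then show ?thesis unfolding phif_def using *[of x] *[of "x - d"] by simp
qed

lemma phif_bound: "e > 0 \<Longrightarrow> 2 * e \<le> d \<Longrightarrow> \<bar>phif a d e x\<bar> \<le> d"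
  using Phi_bounds[of e d a x] Phi_bounds[of e d a "x - d"] by (simp add: phif_def)

lemma gf_bound: "\<bar>gf a d e x\<bar> \<le> 1"
  using Pf_bounds[of a d e x] Pf_bounds[of a d e "x - d"] by (simp add: gf_def)

lemma tf_test: assumes "e > 0" "4 * e \<le> d" "0 \<le> a" "a + 2 * d \<le> 1"
  shows "test_fun (tf a d e)"
  unfolding test_fun_def
proof (intro conjI allI)
  fix k x
  show "(tf a d e k has_real_derivative tf a d e (Suc k) x) (at x)"
  proof (cases k)
    case 0 then show ?thesis using phif_deriv[OF assms(1)] by (simp add: tf_def)
  next
    case (Suc j)
    then show ?thesis using cd(1)[OF cinf_iter[OF gf_cinf[OF assms(1)]], of j a d x]
      by (simp add: tf_def)
  qed
next
  show "\<exists>A B. 0 < A \<and> A \<le> B \<and> B < 1 \<and> (\<forall>x. x \<notin> {A..B} \<longrightarrow> tf a d e 0 x = 0)"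
  proof (rule exI[of _ "a + e"], rule exI[of _ "a + 2 * d - e"], intro conjI allI impI)
    show "0 < a + e" "a + e \<le> a + 2 * d - e" "a + 2 * d - e < 1" using assms by auto
    fix x assume "x \<notin> {a + e..a + 2 * d - e}"
    then have "x \<le> a + e \<or> x \<ge> a + 2 * d - e" by auto
    then have "phif a d e x = 0" using assms by (intro phif_supp) auto
    then show "tf a d e 0 x = 0" by (simp add: tf_def)
  qed
qed

lemma Pf_lim: assumes "d > 0"
  shows "(\<lambda>k. Pf a d (d / (real k + 4)) x) \<longlonglongrightarrow> indicator {a<..<a+d} x"
proof (cases "x \<in> {a<..<a+d}")
  case True
  define m where "m = min (x - a) (a + d - x)"
  have m: "m > 0" using True by (auto simp: m_def)
  obtain N :: nat where N: "2 * d / m < real N" using reals_Archimedean2 by blast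
  have "\<forall>k\<ge>N. Pf a d (d / (real k + 4)) x = 1"
  proof (intro allI impI)
    fix k assume k: "N \<le> k"
    have "2 * d / m < real k + 4" using N k by linarith
    then have "2 * d < m * (real k + 4)" using m by (simp add: field_simps)
    then have "2 * (d / (real k + 4)) \<le> m" by (simp add: field_simps)
    then show "Pf a d (d / (real k + 4)) x = 1"
      using assms by (intro Pf_one) (auto simp: m_def)
  qed
  then show ?thesis using True
    by (intro tendsto_eventually) (auto simp: eventually_sequentially)
next
  case False
  have "Pf a d (d / (real k + 4)) x = 0" for k
  proof -
    define ee where "ee = d / (real k + 4)"
    have pos: "ee > 0" using assms by (simp add: ee_def)
    have "x \<le> a \<or> x \<ge> a + d" using False by auto
    then have "x \<le> a + ee \<or> x \<ge> a + d - ee" using pos by auto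
    then show ?thesis using Pf_zero[OF pos] unfolding ee_def by blast
  qed
  then show ?thesis using False by simp
qed

lemma core:
  fixes u u' :: "real \<Rightarrow> real"
  assumes wd: "weak_deriv01 u u'" and um: "u \<in> borel_measurable borel" and u'm: "u' \<in> borel_measurable borel"
    and ui: "integrable lborel (\<lambda>x. indicator {0<..<1} x * u x)"
    and u'i: "integrable lborel (\<lambda>x. indicator {0<..<1} x * u' x)"
    and a: "0 \<le> a" and d: "0 < d" and ad: "a + 2 * d \<le> 1"
  shows "\<bar>(\<integral>x. indicator {a<..<a+d} x * u x \<partial>lborel) - (\<integral>x. indicator {a+d<..<a+2*d} x * u x \<partial>lborel)\<bar>
         \<le> d * (\<integral>x. indicator {a<..<a+2*d} x * \<bar>u' x\<bar> \<partial>lborel)"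
proof -
  define e where "e k = d / (real k + 4)" for k :: nat
  have e: "e k > 0" "4 * e k \<le> d" for k using d by (auto simp: e_def field_simps)
  define B where "B = d * (\<integral>x. indicator {a<..<a+2*d} x * \<bar>u' x\<bar> \<partial>lborel)"
  define s where "s k x = indicator {0<..<1} x * (u x * gf a d (e k) x)" for k x
  define f where "f x = indicator {a<..<a+d} x * u x - indicator {a+d<..<a+2*d} x * u x" for x
  have sub: "{a<..<a+2*d} \<subseteq> {0<..<1}" "{a<..<a+d} \<subseteq> {0<..<1}" "{a+d<..<a+2*d} \<subseteq> {0<..<1}"
    using a d ad by auto
  have gfm: "gf a d (e k) \<in> borel_measurable borel" for k
    by (intro borel_measurable_continuous_onI cinf_cont gf_cinf e)
  have phim: "phif a d (e k) \<in> borel_measurable borel" for k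
    by (intro borel_measurable_continuous_onI DERIV_continuous_on[where D="\<lambda>x. gf a d (e k) x"] phif_deriv e)
  have int_sub: "integrable lborel (\<lambda>x. indicator S x * u x)" if "S \<subseteq> {0<..<1}" "S \<in> sets borel" for S
  proof (rule Bochner_Integration.integrable_bound[OF ui])
    show "(\<lambda>x. indicator S x * u x) \<in> borel_measurable lborel" using that um by measurable
    show "AE x in lborel. norm (indicator S x * u x) \<le> norm (indicator {0<..<1} x * u x)"
      by (intro AE_I2) (use that in \<open>auto simp: indicator_def\<close>)
  qed
  have lim: "(\<lambda>k. integral\<^sup>L lborel (s k)) \<longlonglongrightarrow> integral\<^sup>L lborel f"
  proof (rule integral_dominated_convergence[where w="\<lambda>x. norm (indicator {0<..<1} x * u x)"])
    show "f \<in> borel_measurable lborel" unfolding f_def using um by measurable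
    show "s k \<in> borel_measurable lborel" for k unfolding s_def using um gfm[of k] by measurable
    show "integrable lborel (\<lambda>x. norm (indicator {0<..<1} x * u x))" using ui by simp
    show "AE x in lborel. norm (s k x) \<le> norm (indicator {0<..<1} x * u x)" for k
      using gf_bound[of a d "e k"] unfolding s_def
      by (intro AE_I2) (auto simp: abs_mult indicator_def intro: mult_left_le)
    show "AE x in lborel. (\<lambda>k. s k x) \<longlonglongrightarrow> f x"
    proof (intro AE_I2)
      fix x
      have "(\<lambda>k. indicator {0<..<1} x * (u x * (Pf a d (e k) x - Pf a d (e k) (x - d))))
         \<longlonglongrightarrow> indicator {0<..<1} x * (u x * (indicator {a<..<a+d} x - indicator {a<..<a+d} (x - d)))"
        unfolding e_def by (intro tendsto_intros Pf_lim d)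
      moreover have "indicator {0<..<1} x * (u x * (indicator {a<..<a+d} x - indicator {a<..<a+d} (x - d))) = f x"
        using sub unfolding f_def by (auto simp: indicator_def)
      ultimately show "(\<lambda>k. s k x) \<longlonglongrightarrow> f x" unfolding s_def gf_def by simp
    qed
  qed
  have bnd: "\<bar>integral\<^sup>L lborel (s k)\<bar> \<le> B" for k
  proof -
    have "integral\<^sup>L lborel (s k) = - (\<integral>x. indicator {0<..<1} x * (u' x * phif a d (e k) x) \<partial>lborel)"
      using wd tf_test[OF e(1) e(2) a ad, of k] unfolding weak_deriv01_def s_def
      by (auto simp: tf_def)
    moreover have "\<bar>\<integral>x. indicator {0<..<1} x * (u' x * phif a d (e k) x) \<partial>lborel\<bar> \<le> B"
      unfolding B_def integral_mult_right_zero[symmetric]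
    proof (rule integral_abs_bound_integral)
      show "integrable lborel (\<lambda>x. indicator {0<..<1} x * (u' x * phif a d (e k) x))"
      proof (rule Bochner_Integration.integrable_bound[where f="\<lambda>x. d * (indicator {0<..<1} x * u' x)"])
        show "integrable lborel (\<lambda>x. d * (indicator {0<..<1} x * u' x))" using u'i by simp
        show "(\<lambda>x. indicator {0<..<1} x * (u' x * phif a d (e k) x)) \<in> borel_measurable lborel"
          using u'm phim[of k] by measurable
        show "AE x in lborel. norm (indicator {0<..<1} x * (u' x * phif a d (e k) x)) \<le> norm (d * (indicator {0<..<1} x * u' x))"
        proof (intro AE_I2)
          fix x
          have hb: "\<bar>phif a d (e k) x\<bar> \<le> d" using phif_bound[of "e k" d a x] e[of k] by simp
          have "\<bar>u' x\<bar> * \<bar>phif a d (e k) x\<bar> \<le> \<bar>u' x\<bar> * d" by (rule mult_left_mono[OF hb]) simp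
          then show "norm (indicator {0<..<1} x * (u' x * phif a d (e k) x)) \<le> norm (d * (indicator {0<..<1} x * u' x))"
            using d by (auto simp: abs_mult indicator_def mult.commute)
        qed
      qed
      show "integrable lborel (\<lambda>x. d * (indicator {a<..<a+2*d} x * \<bar>u' x\<bar>))"
      proof (rule Bochner_Integration.integrable_bound[where f="\<lambda>x. d * (indicator {0<..<1} x * u' x)"])
        show "integrable lborel (\<lambda>x. d * (indicator {0<..<1} x * u' x))" using u'i by simp
        show "(\<lambda>x. d * (indicator {a<..<a+2*d} x * \<bar>u' x\<bar>)) \<in> borel_measurable lborel"
          using u'm by measurable
        show "AE x in lborel. norm (d * (indicator {a<..<a+2*d} x * \<bar>u' x\<bar>)) \<le> norm (d * (indicator {0<..<1} x * u' x))"
        proof (intro AE_I2)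
          fix x
          show "norm (d * (indicator {a<..<a+2*d} x * \<bar>u' x\<bar>)) \<le> norm (d * (indicator {0<..<1} x * u' x))"
            using sub(1) d by (cases "x \<in> {a<..<a+2*d}") (auto simp: abs_mult indicator_def)
        qed
      qed
      fix x
      show "\<bar>indicator {0<..<1} x * (u' x * phif a d (e k) x)\<bar> \<le> d * (indicator {a<..<a+2*d} x * \<bar>u' x\<bar>)"
      proof (cases "x \<in> {a<..<a+2*d}")
        case True
        have hb: "\<bar>phif a d (e k) x\<bar> \<le> d" using phif_bound[of "e k" d a x] e[of k] by simp
        have "\<bar>u' x\<bar> * \<bar>phif a d (e k) x\<bar> \<le> \<bar>u' x\<bar> * d" by (rule mult_left_mono[OF hb]) simp
        moreover have "x \<in> {0<..<1}" using sub(1) True by blast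
        ultimately show ?thesis using True by (simp add: abs_mult mult.commute)
      next
        case False
        then have "phif a d (e k) x = 0" using e[of k] by (intro phif_supp) auto
        then show ?thesis using d by simp
      qed
    qed
    ultimately show ?thesis by simp
  qed
  have "\<bar>integral\<^sup>L lborel f\<bar> \<le> B"
    by (rule LIMSEQ_le_const2[OF tendsto_rabs[OF lim]]) (use bnd in auto)
  moreover have "integral\<^sup>L lborel f = (\<integral>x. indicator {a<..<a+d} x * u x \<partial>lborel) - (\<integral>x. indicator {a+d<..<a+2*d} x * u x \<partial>lborel)"
    unfolding f_def using sub by (intro Bochner_Integration.integral_diff int_sub) auto
  ultimately show ?thesis unfolding B_def by simp
qed

lemma nn_affine:
  fixes f :: "'a::euclidean_space \<Rightarrow> ennreal"
  assumes f: "f \<in> borel_measurable borel" and c: "c \<noteq> 0"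
  shows "(\<integral>\<^sup>+ y. f y \<partial>lborel) = (\<integral>\<^sup>+ x. ennreal (\<bar>c\<bar> ^ DIM('a)) * f (t + c *\<^sub>R x) \<partial>lborel)"
proof -
  have "(\<integral>\<^sup>+ y. f y \<partial>lborel) = (\<integral>\<^sup>+ y. f y \<partial>density (distr lborel borel (\<lambda>x. t + c *\<^sub>R x)) (\<lambda>_. \<bar>c\<bar>^DIM('a)))"
    using lborel_affine[OF c, of t] by (rule arg_cong)
  also have "\<dots> = (\<integral>\<^sup>+ y. ennreal (\<bar>c\<bar>^DIM('a)) * f y \<partial>distr lborel borel (\<lambda>x. t + c *\<^sub>R x))"
    using f by (subst nn_integral_density) auto
  also have "\<dots> = (\<integral>\<^sup>+ x. ennreal (\<bar>c\<bar>^DIM('a)) * f (t + c *\<^sub>R x) \<partial>lborel)"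
    using f by (subst nn_integral_distr) auto
  finally show ?thesis .
qed

lemma nn_reflect:
  fixes f :: "'a::euclidean_space \<Rightarrow> ennreal"
  assumes f: "f \<in> borel_measurable borel"
  shows "(\<integral>\<^sup>+ y. f (q - y) \<partial>lborel) = (\<integral>\<^sup>+ y. f y \<partial>lborel)"
  using nn_affine[OF f, of "-1" q] by simp

lemma nn_shift:
  fixes f :: "'a::euclidean_space \<Rightarrow> ennreal"
  assumes f: "f \<in> borel_measurable borel"
  shows "(\<integral>\<^sup>+ y. f (y - q) \<partial>lborel) = (\<integral>\<^sup>+ y. f y \<partial>lborel)"
proof -
  have "(\<lambda>y. f (y - q)) \<in> borel_measurable borel" using f by measurable
  from nn_affine[OF this, of 1 q] show ?thesis by simp
qed

lemma bump_nonneg: "bump y \<ge> 0" by (simp add: bump_def)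

lemma bump_meas: "bump \<in> borel_measurable borel"
  unfolding bump_def by measurable

lemma stdJ_nonneg: "stdJ y \<ge> 0"
  unfolding stdJ_def by (intro divide_nonneg_nonneg bump_nonneg integral_nonneg_AE) (auto simp: bump_nonneg)

lemma stdJ_meas: "stdJ \<in> borel_measurable borel"
  unfolding stdJ_def[abs_def] using bump_meas by measurable

lemma stdJ_int: "(\<integral>\<^sup>+ y. ennreal (stdJ y) \<partial>lborel) \<le> 1"
proof (cases "integrable lborel bump")
  case False
  then show ?thesis by (simp add: stdJ_def not_integrable_integral_eq)
next
  case True
  define c where "c = (\<integral>z. bump z \<partial>lborel)"
  have c0: "c \<ge> 0" unfolding c_def by (intro integral_nonneg_AE) (auto simp: bump_nonneg)
  have nn: "(\<integral>\<^sup>+ y. ennreal (bump y) \<partial>lborel) = ennreal c"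
    unfolding c_def using True by (intro nn_integral_eq_integral) (auto simp: bump_nonneg)
  show ?thesis
  proof (cases "c = 0")
    case True then show ?thesis by (simp add: stdJ_def c_def[symmetric])
  next
    case False
    then have cp: "c > 0" using c0 by simp
    have "(\<integral>\<^sup>+ y. ennreal (stdJ y) \<partial>lborel) = (\<integral>\<^sup>+ y. ennreal (1 / c) * ennreal (bump y) \<partial>lborel)"
      unfolding stdJ_def c_def[symmetric] using cp
      by (intro nn_integral_cong) (simp add: ennreal_mult'[symmetric] bump_nonneg)
    also have "\<dots> = ennreal (1 / c) * ennreal c"
      using bump_meas by (subst nn_integral_cmult) (auto simp: nn)
    also have "\<dots> = 1" using cp by (simp add: ennreal_mult'[symmetric])
    finally show ?thesis by simp
  qed
qed

lemma J_nonneg: "Jdelta \<delta> y \<ge> 0"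
  unfolding Jdelta_def by (simp add: stdJ_nonneg)

lemma J_meas[measurable]: "Jdelta \<delta> \<in> borel_measurable borel"
  unfolding Jdelta_def[abs_def] using stdJ_meas by measurable

lemma J_int: assumes "\<delta> > 0" shows "(\<integral>\<^sup>+ y. ennreal (Jdelta \<delta> y) \<partial>lborel) \<le> 1"
proof -
  have m: "(\<lambda>y. ennreal (Jdelta \<delta> y)) \<in> borel_measurable borel" using J_meas by measurable
  have "(\<integral>\<^sup>+ y. ennreal (Jdelta \<delta> y) \<partial>lborel)
      = (\<integral>\<^sup>+ x. ennreal (\<bar>\<delta>\<bar> ^ DIM(real \<times> real)) * ennreal (Jdelta \<delta> (0 + \<delta> *\<^sub>R x)) \<partial>lborel)"
    using assms by (intro nn_affine[OF m]) simp
  also have "\<dots> = (\<integral>\<^sup>+ x. ennreal (stdJ x) \<partial>lborel)"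
    using assms by (intro nn_integral_cong) (simp add: Jdelta_def ennreal_mult'[symmetric] power2_eq_square)
  finally show ?thesis using stdJ_int by simp
qed

lemma wcs:
  fixes w g :: "'a::euclidean_space \<Rightarrow> real"
  assumes wm: "w \<in> borel_measurable borel" and gm: "g \<in> borel_measurable borel"
    and w0: "\<And>x. w x \<ge> 0" and W: "(\<integral>\<^sup>+ x. ennreal (w x) \<partial>lborel) \<le> ennreal W"
  shows "ennreal ((\<integral>x. w x * g x \<partial>lborel)\<^sup>2) \<le> ennreal W * (\<integral>\<^sup>+ x. ennreal (w x * (g x)\<^sup>2) \<partial>lborel)"
proof -
  have A: "ennreal \<bar>\<integral>x. w x * g x \<partial>lborel\<bar> \<le> (\<integral>\<^sup>+ x. ennreal (w x * \<bar>g x\<bar>) \<partial>lborel)"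
  proof (cases "integrable lborel (\<lambda>x. w x * g x)")
    case True
    from integral_norm_bound_ennreal[OF True] show ?thesis using w0 by (simp add: abs_mult)
  next
    case False then show ?thesis by (simp add: not_integrable_integral_eq)
  qed
  have m1: "(\<lambda>x. ennreal (sqrt (w x))) \<in> borel_measurable lborel" using wm by measurable
  have m2: "(\<lambda>x. ennreal (sqrt (w x) * \<bar>g x\<bar>)) \<in> borel_measurable lborel" using wm gm by measurable
  have CS: "(\<integral>\<^sup>+x. ennreal (sqrt (w x)) * ennreal (sqrt (w x) * \<bar>g x\<bar>) \<partial>lborel)\<^sup>2
     \<le> (\<integral>\<^sup>+x. ennreal (sqrt (w x)) ^ 2 \<partial>lborel) * (\<integral>\<^sup>+x. ennreal (sqrt (w x) * \<bar>g x\<bar>) ^ 2 \<partial>lborel)"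
    by (rule Cauchy_Schwarz_nn_integral[OF m1 m2])
  have e1: "ennreal (sqrt (w x)) * ennreal (sqrt (w x) * \<bar>g x\<bar>) = ennreal (w x * \<bar>g x\<bar>)" for x
    using w0[of x] by (simp add: ennreal_mult''[symmetric] mult.assoc[symmetric] real_sqrt_mult[symmetric])
  have e2: "ennreal (sqrt (w x)) ^ 2 = ennreal (w x)" for x
    using w0[of x] by (simp add: ennreal_power)
  have e3: "ennreal (sqrt (w x) * \<bar>g x\<bar>) ^ 2 = ennreal (w x * (g x)\<^sup>2)" for x
    using w0[of x] by (simp add: ennreal_power power_mult_distrib)
  have "ennreal ((\<integral>x. w x * g x \<partial>lborel)\<^sup>2) = (ennreal \<bar>\<integral>x. w x * g x \<partial>lborel\<bar>)\<^sup>2"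
    by (simp add: ennreal_power)
  also have "\<dots> \<le> (\<integral>\<^sup>+ x. ennreal (w x * \<bar>g x\<bar>) \<partial>lborel)\<^sup>2"
    by (rule power_mono[OF A]) simp
  also have "\<dots> \<le> (\<integral>\<^sup>+x. ennreal (w x) \<partial>lborel) * (\<integral>\<^sup>+x. ennreal (w x * (g x)\<^sup>2) \<partial>lborel)"
    using CS unfolding e1 e2 e3 .
  also have "\<dots> \<le> ennreal W * (\<integral>\<^sup>+x. ennreal (w x * (g x)\<^sup>2) \<partial>lborel)"
    by (rule mult_right_mono[OF W]) simp
  finally show ?thesis .
qed

lemma Q_open: "open (Qset T)" unfolding Qset_def by (intro open_Times) auto

lemma Q_meas[measurable]: "Qset T \<in> sets borel" using Q_open by simp

lemma rho_pt:
  assumes \<delta>: "\<delta> > 0" and pm: "p \<in> borel_measurable borel"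
  shows "ennreal ((rho_delta T p \<delta> q)\<^sup>2) \<le> (\<integral>\<^sup>+ y. ennreal (Jdelta \<delta> (q - y) * (indicator (Qset T) y * p y)\<^sup>2) \<partial>lborel)"
proof -
  have wm: "(\<lambda>y. Jdelta \<delta> (q - y)) \<in> borel_measurable borel" using J_meas by measurable
  have Jm: "(\<lambda>y. ennreal (Jdelta \<delta> y)) \<in> borel_measurable borel" using J_meas by measurable
  have W: "(\<integral>\<^sup>+ y. ennreal (Jdelta \<delta> (q - y)) \<partial>lborel) \<le> ennreal 1"
    using nn_reflect[OF Jm, of q] J_int[OF \<delta>] by simp
  have "ennreal ((rho_delta T p \<delta> q)\<^sup>2) \<le> ennreal 1 * (\<integral>\<^sup>+ y. ennreal (Jdelta \<delta> (q - y) * (indicator (Qset T) y * p y)\<^sup>2) \<partial>lborel)"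
    unfolding rho_delta_def
    by (rule wcs[OF wm _ J_nonneg W]) (use pm in measurable)
  then show ?thesis by simp
qed

lemma rho_L2:
  assumes \<delta>: "\<delta> > 0" and pm: "p \<in> borel_measurable borel"
  shows "(\<integral>\<^sup>+ q. ennreal ((rho_delta T p \<delta> q)\<^sup>2) \<partial>lborel) \<le> (\<integral>\<^sup>+ y. ennreal ((indicator (Qset T) y * p y)\<^sup>2) \<partial>lborel)"
proof -
  have "(\<integral>\<^sup>+ q. ennreal ((rho_delta T p \<delta> q)\<^sup>2) \<partial>lborel)
      \<le> (\<integral>\<^sup>+ q. (\<integral>\<^sup>+ y. ennreal (Jdelta \<delta> (q - y) * (indicator (Qset T) y * p y)\<^sup>2) \<partial>lborel) \<partial>lborel)"
    by (intro nn_integral_mono rho_pt \<delta> pm)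
  also have "\<dots> = (\<integral>\<^sup>+ y. (\<integral>\<^sup>+ q. ennreal (Jdelta \<delta> (q - y) * (indicator (Qset T) y * p y)\<^sup>2) \<partial>lborel) \<partial>lborel)"
  proof (rule lborel_pair.Fubini'[symmetric])
    show "(\<lambda>(q, y). ennreal (Jdelta \<delta> (q - y) * (indicator (Qset T) y * p y)\<^sup>2)) \<in> borel_measurable (lborel \<Otimes>\<^sub>M lborel)"
      using J_meas pm by measurable
  qed
  also have "\<dots> \<le> (\<integral>\<^sup>+ y. ennreal ((indicator (Qset T) y * p y)\<^sup>2) \<partial>lborel)"
  proof (intro nn_integral_mono)
    fix y
    have Jm: "(\<lambda>y. ennreal (Jdelta \<delta> y)) \<in> borel_measurable borel" using J_meas by measurable
    have "(\<integral>\<^sup>+ q. ennreal (Jdelta \<delta> (q - y) * (indicator (Qset T) y * p y)\<^sup>2) \<partial>lborel)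
        = (\<integral>\<^sup>+ q. ennreal (Jdelta \<delta> (q - y)) * ennreal ((indicator (Qset T) y * p y)\<^sup>2) \<partial>lborel)"
      by (intro nn_integral_cong) (simp add: ennreal_mult J_nonneg)
    also have "\<dots> = (\<integral>\<^sup>+ q. ennreal (Jdelta \<delta> (q - y)) \<partial>lborel) * ennreal ((indicator (Qset T) y * p y)\<^sup>2)"
      using J_meas by (intro nn_integral_multc) measurable
    also have "\<dots> \<le> 1 * ennreal ((indicator (Qset T) y * p y)\<^sup>2)"
      using nn_shift[OF Jm, of y] J_int[OF \<delta>] by (intro mult_right_mono) auto
    finally show "(\<integral>\<^sup>+ q. ennreal (Jdelta \<delta> (q - y) * (indicator (Qset T) y * p y)\<^sup>2) \<partial>lborel)
        \<le> ennreal ((indicator (Qset T) y * p y)\<^sup>2)" by simp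
  qed
  finally show ?thesis .
qed

lemma sbp:
  fixes z f :: "nat \<Rightarrow> real"
  assumes "n \<ge> 1"
  shows "(\<Sum>i=1..n. z i * (f i - f (i - 1))) = z n * f n - z 1 * f 0 - (\<Sum>i=1..n-1. f i * (z (i + 1) - z i))"
  using assms
proof (induction n rule: dec_induct)
  case base then show ?case by (simp add: algebra_simps)
next
  case (step m)
  have "(\<Sum>i=1..Suc m. z i * (f i - f (i - 1))) = (\<Sum>i=1..m. z i * (f i - f (i - 1))) + z (Suc m) * (f (Suc m) - f m)"
    by simp
  also have "\<dots> = z m * f m - z 1 * f 0 - (\<Sum>i=1..m-1. f i * (z (i + 1) - z i)) + z (Suc m) * (f (Suc m) - f m)"
    using step.IH by simp
  also have "(\<Sum>i=1..m. f i * (z (i + 1) - z i)) = (\<Sum>i=1..m-1. f i * (z (i + 1) - z i)) + f m * (z (m + 1) - z m)"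
    using step.hyps by (cases m) auto
  ultimately show ?case by (simp add: algebra_simps)
qed

lemma sbp0:
  fixes z f :: "nat \<Rightarrow> real"
  assumes "n \<ge> 1" "f 0 = 0" "f n = 0"
  shows "(\<Sum>i=1..n. z i * (f i - f (i - 1))) = - (\<Sum>i=1..n-1. f i * (z (i + 1) - z i))"
  using sbp[OF assms(1), of z f] assms by simp

lemma mvt_bounds:
  assumes der: "\<And>u. (h has_real_derivative h' u) (at u)" and bd: "\<And>u. lo \<le> h' u \<and> h' u \<le> hi" and "lo \<le> hi"
  shows "\<exists>m. lo \<le> m \<and> m \<le> hi \<and> h y - h x = m * (y - x)"
proof -
  consider "x < y" | "x = y" | "y < x" by linarith
  then show ?thesis
  proof cases
    case 1
    from MVT2[OF 1, of h h'] der obtain z where "h y - h x = (y - x) * h' z" by blast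
    then show ?thesis using bd[of z] by (intro exI[of _ "h' z"]) simp
  next
    case 2 then show ?thesis using \<open>lo \<le> hi\<close> by (intro exI[of _ lo]) simp
  next
    case 3
    from MVT2[OF 3, of h h'] der obtain z where "h x - h y = (x - y) * h' z" by blast
    then show ?thesis using bd[of z] by (intro exI[of _ "h' z"]) (simp add: algebra_simps)
  qed
qed

lemma key_ineq:
  fixes m F \<beta> r lo hi Cb :: real
  assumes "lo \<le> m" "m \<le> hi" "0 < lo" "\<bar>\<beta>\<bar> \<le> Cb"
  shows "m * (F * (F - \<beta> * r)) \<ge> lo / 2 * F\<^sup>2 - hi * Cb\<^sup>2 / 2 * r\<^sup>2"
proof -
  define X where "X = F * (F - \<beta> * r)"
  have sq: "0 \<le> (F - \<beta> * r)\<^sup>2" by simp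
  have X: "X \<ge> F\<^sup>2 / 2 - \<beta>\<^sup>2 * r\<^sup>2 / 2"
    using sq unfolding X_def by (simp add: power2_eq_square algebra_simps)
  have b2: "\<beta>\<^sup>2 \<le> Cb\<^sup>2" using assms(4) by (metis abs_ge_zero power2_abs power_mono)
  have r2: "\<beta>\<^sup>2 * r\<^sup>2 \<le> Cb\<^sup>2 * r\<^sup>2" using b2 by (simp add: mult_right_mono)
  have hi0: "hi > 0" using assms by linarith
  show ?thesis
  proof (cases "X \<ge> 0")
    case True
    have "m * X \<ge> lo * X" using True assms by (simp add: mult_right_mono)
    moreover have "lo * X \<ge> lo * (F\<^sup>2 / 2 - \<beta>\<^sup>2 * r\<^sup>2 / 2)" using X assms by (simp add: mult_left_mono)
    moreover have "lo * (\<beta>\<^sup>2 * r\<^sup>2) \<le> hi * (Cb\<^sup>2 * r\<^sup>2)"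
      using r2 assms b2 by (intro mult_mono) auto
    ultimately show ?thesis unfolding X_def[symmetric] by (simp add: algebra_simps)
  next
    case False
    have "m * X \<ge> hi * X" using False assms by (simp add: mult_right_mono_neg)
    moreover have "hi * X \<ge> hi * (F\<^sup>2 / 2 - \<beta>\<^sup>2 * r\<^sup>2 / 2)" using X hi0 by (simp add: mult_left_mono)
    moreover have "hi * F\<^sup>2 \<ge> lo * F\<^sup>2" using assms by (simp add: mult_right_mono)
    moreover have "hi * (\<beta>\<^sup>2 * r\<^sup>2) \<le> hi * (Cb\<^sup>2 * r\<^sup>2)" using r2 hi0 by (simp add: mult_left_mono)
    ultimately show ?thesis unfolding X_def[symmetric] by (simp add: algebra_simps)
  qed
qed

lemma dx_pos: "n \<ge> 1 \<Longrightarrow> dx n > 0" by (simp add: dx_def)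

locale scheme =
  fixes T \<delta>h Ch \<delta>b Cb :: real and h h' h'' b :: "real \<Rightarrow> real" and p :: "real \<times> real \<Rightarrow> real"
    and v0 :: "real \<Rightarrow> real" and n :: nat and \<delta> :: real and v vd :: "nat \<Rightarrow> real \<Rightarrow> real"
  assumes T: "T > 0" and n: "n \<ge> 1"
    and pos: "\<delta>h > 0" "Ch > 0" "\<delta>b > 0" "Cb > 0"
    and h1: "\<And>u. (h has_real_derivative h' u) (at u)"
    and h2: "\<And>u. (h' has_real_derivative h'' u) (at u)"
    and hbd: "\<And>u. \<delta>h \<le> h' u \<and> h' u \<le> Ch"
    and bc: "continuous_on UNIV b"
    and bbd: "\<And>u. \<delta>b \<le> b u \<and> b u \<le> Cb"
    and sol: "is_scheme_solution T h' b p v0 n \<delta> v vd"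
begin

abbreviation "\<Delta> \<equiv> dx n"
definition "r i t = cell_avg n (\<lambda>\<xi>. rho_delta T p \<delta> (t, \<xi>)) i"
definition "F i t = flux b n v r i t"

lemma D: "\<Delta> > 0" using n by (simp add: dx_def)

lemma solD:
  assumes "i \<in> {1..n}"
  shows "\<And>t. t \<in> {0..T} \<Longrightarrow> (v i has_real_derivative vd i t) (at t within {0..T})"
    "continuous_on {0..T} (vd i)" "v i 0 = cell_avg n v0 i"
    "\<And>t. t \<in> {0..T} \<Longrightarrow> h' (v i t) * vd i t = (F i t - F (i - 1) t) / \<Delta>"
  using sol assms unfolding is_scheme_solution_def Let_def F_def r_def[abs_def] by auto

lemma F0: "F 0 t = 0" by (simp add: F_def flux_def)
lemma Fn: "j \<ge> n \<Longrightarrow> F j t = 0" using n by (simp add: F_def flux_def)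
lemma Fi: "1 \<le> j \<Longrightarrow> j \<le> n - 1 \<Longrightarrow> F j t = (v (j + 1) t - v j t) / \<Delta> + b ((v j t + v (j + 1) t) / 2) * r j t"
  by (simp add: F_def flux_def)

lemma F_sum: assumes t: "t \<in> {0..T}" shows "j \<le> n \<Longrightarrow> F j t = (\<Sum>i=1..j. \<Delta> * (h' (v i t) * vd i t))"
proof (induction j)
  case 0 then show ?case by (simp add: F0)
next
  case (Suc j)
  have "h' (v (Suc j) t) * vd (Suc j) t = (F (Suc j) t - F j t) / \<Delta>"
    using solD(4)[of "Suc j" t] Suc.prems t by simp
  then have "F (Suc j) t = F j t + \<Delta> * (h' (v (Suc j) t) * vd (Suc j) t)"
    using D by (simp add: field_simps)
  then show ?case using Suc by simp
qed

lemma cont_h': "continuous_on UNIV h'"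
  using h2 by (intro DERIV_continuous_on) (auto intro: has_field_derivative_at_within)

lemma cont_h: "continuous_on UNIV h"
  using h1 by (intro DERIV_continuous_on) (auto intro: has_field_derivative_at_within)

lemma cont_v: "i \<in> {1..n} \<Longrightarrow> continuous_on {0..T} (v i)"
  by (rule DERIV_continuous_on[where D="vd i"], rule solD(1)) auto

lemma cont_zd: "i \<in> {1..n} \<Longrightarrow> continuous_on {0..T} (\<lambda>t. h' (v i t) * vd i t)"
  by (intro continuous_on_mult continuous_on_compose2[OF cont_h' cont_v] solD(2)) auto

lemma cont_F: "continuous_on {0..T} (F j)"
proof (cases "j \<le> n")
  case True
  have "continuous_on {0..T} (\<lambda>t. \<Sum>i=1..j. \<Delta> * (h' (v i t) * vd i t))"
    using True by (intro continuous_on_sum continuous_on_mult continuous_on_const cont_zd) auto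
  then show ?thesis by (rule continuous_on_eq) (use F_sum True in auto)
next
  case False then show ?thesis using Fn[of j] by simp
qed

lemma r_eq: assumes "1 \<le> j" "j \<le> n - 1"
  shows "r j t = (F j t - (v (j + 1) t - v j t) / \<Delta>) / b ((v j t + v (j + 1) t) / 2)"
  using Fi[OF assms, of t] bbd[of "(v j t + v (j + 1) t) / 2"] pos by (simp add: field_simps)

lemma cont_r: assumes "1 \<le> j" "j \<le> n - 1" shows "continuous_on {0..T} (r j)"
proof -
  have j: "j \<in> {1..n}" "j + 1 \<in> {1..n}" using assms n by auto
  have c1: "continuous_on {0..T} (\<lambda>t. F j t - (v (j + 1) t - v j t) / \<Delta>)"
    using D by (intro continuous_on_diff continuous_on_divide cont_F cont_v j continuous_on_const) auto
  have c2: "continuous_on {0..T} (\<lambda>t. b ((v j t + v (j + 1) t) / 2))"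
    by (rule continuous_on_compose2[OF bc]) (intro continuous_on_divide continuous_on_add cont_v j continuous_on_const, auto)
  have nz: "\<forall>t\<in>{0..T}. b ((v j t + v (j + 1) t) / 2) \<noteq> 0"
    using bbd pos by (metis order.strict_iff_not less_le_trans)
  have "continuous_on {0..T} (\<lambda>t. (F j t - (v (j + 1) t - v j t) / \<Delta>) / b ((v j t + v (j + 1) t) / 2))"
    using continuous_on_divide[OF c1 c2] nz by blast
  then show ?thesis using r_eq[OF assms] by simp
qed

end

context scheme begin

definition "z i t = h (v i t)"
definition "E t = (\<Sum>i=1..n. \<Delta> * (z i t)\<^sup>2 / 2)"
definition "E' t = (\<Sum>i=1..n. z i t * (F i t - F (i - 1) t))"
definition "A t = (\<Sum>i=1..n-1. \<Delta> * (F i t)\<^sup>2)"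
definition "R t = (\<Sum>i=1..n-1. \<Delta> * (r i t)\<^sup>2)"

lemma E_deriv: assumes t: "t \<in> {0..T}" shows "(E has_real_derivative E' t) (at t within {0..T})"
proof -
  have "((\<lambda>t. \<Sum>i=1..n. \<Delta> * (z i t)\<^sup>2 / 2) has_real_derivative (\<Sum>i=1..n. z i t * (F i t - F (i - 1) t))) (at t within {0..T})"
  proof (rule DERIV_sum)
    fix i assume i: "i \<in> {1..n}"
    have dz: "((\<lambda>t. h (v i t)) has_real_derivative h' (v i t) * vd i t) (at t within {0..T})"
      by (rule DERIV_chain2[OF h1 solD(1)[OF i t]])
    have "((\<lambda>t. (h (v i t)) ^ 2) has_real_derivative real 2 * ((h' (v i t) * vd i t) * h (v i t) ^ (2 - Suc 0))) (at t within {0..T})"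
      by (rule DERIV_power[OF dz])
    then have d1: "((\<lambda>t. \<Delta> * (h (v i t))\<^sup>2 / 2) has_real_derivative \<Delta> * (real 2 * ((h' (v i t) * vd i t) * h (v i t) ^ (2 - Suc 0))) / 2) (at t within {0..T})"
      by (intro DERIV_cdivide DERIV_cmult)
    have e: "\<Delta> * (h' (v i t) * vd i t) = F i t - F (i - 1) t"
      using solD(4)[OF i t] D by (simp add: field_simps)
    have eq: "\<Delta> * (real 2 * ((h' (v i t) * vd i t) * h (v i t) ^ (2 - Suc 0))) / 2 = h (v i t) * (F i t - F (i - 1) t)"
    proof -
      have "\<Delta> * (real 2 * ((h' (v i t) * vd i t) * h (v i t) ^ (2 - Suc 0))) / 2 = h (v i t) * (\<Delta> * (h' (v i t) * vd i t))"
        by (simp add: algebra_simps)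
      then show ?thesis unfolding e .
    qed
    show "((\<lambda>t. \<Delta> * (z i t)\<^sup>2 / 2) has_real_derivative z i t * (F i t - F (i - 1) t)) (at t within {0..T})"
      unfolding z_def eq[symmetric] by (rule d1)
  qed
  then show ?thesis unfolding E_def[abs_def] E'_def .
qed

lemma E'_eq: "E' t = - (\<Sum>i=1..n-1. F i t * (z (i + 1) t - z i t))"
  unfolding E'_def using sbp0[OF n, of "\<lambda>i. F i t" "\<lambda>i. z i t"] F0 Fn by simp

lemma hlohi: "\<delta>h \<le> Ch" using hbd[of 0] by linarith

lemma pt_ineq: "\<delta>h / 2 * A t \<le> - E' t + Ch * Cb\<^sup>2 / 2 * R t"
proof -
  have each: "\<Delta> * (\<delta>h / 2 * (F i t)\<^sup>2 - Ch * Cb\<^sup>2 / 2 * (r i t)\<^sup>2) \<le> F i t * (z (i + 1) t - z i t)"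
    if i: "i \<in> {1..n-1}" for i
  proof -
    define \<beta> where "\<beta> = b ((v i t + v (i + 1) t) / 2)"
    obtain m where m: "\<delta>h \<le> m" "m \<le> Ch" "h (v (i+1) t) - h (v i t) = m * (v (i+1) t - v i t)"
      using mvt_bounds[OF h1 hbd hlohi] by blast
    have Fi': "v (i+1) t - v i t = \<Delta> * (F i t - \<beta> * r i t)"
      using Fi[of i t] i D unfolding \<beta>_def by (simp add: field_simps)
    have b: "\<bar>\<beta>\<bar> \<le> Cb" using bbd[of "(v i t + v (i + 1) t) / 2"] pos unfolding \<beta>_def by auto
    have "F i t * (z (i + 1) t - z i t) = \<Delta> * (m * (F i t * (F i t - \<beta> * r i t)))"
      unfolding z_def m(3) Fi' by (simp add: algebra_simps)
    moreover have ge: "m * (F i t * (F i t - \<beta> * r i t)) \<ge> \<delta>h / 2 * (F i t)\<^sup>2 - Ch * Cb\<^sup>2 / 2 * (r i t)\<^sup>2"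
      by (rule key_ineq[OF m(1,2) pos(1) b])
    moreover have "\<Delta> * (\<delta>h / 2 * (F i t)\<^sup>2 - Ch * Cb\<^sup>2 / 2 * (r i t)\<^sup>2) \<le> \<Delta> * (m * (F i t * (F i t - \<beta> * r i t)))"
      by (rule mult_left_mono[OF ge]) (use D in simp)
    ultimately show ?thesis by linarith
  qed
  have "\<delta>h / 2 * A t - Ch * Cb\<^sup>2 / 2 * R t = (\<Sum>i=1..n-1. \<Delta> * (\<delta>h / 2 * (F i t)\<^sup>2 - Ch * Cb\<^sup>2 / 2 * (r i t)\<^sup>2))"
    unfolding A_def R_def by (simp add: sum_distrib_left sum_subtractf algebra_simps)
  also have "\<dots> \<le> (\<Sum>i=1..n-1. F i t * (z (i + 1) t - z i t))"
    by (rule sum_mono) (rule each)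
  also have "\<dots> = - E' t" by (simp add: E'_eq)
  finally show ?thesis by simp
qed

lemma cont_A: "continuous_on {0..T} A"
  unfolding A_def[abs_def] by (intro continuous_on_sum continuous_on_mult continuous_on_const continuous_on_power cont_F)

lemma cont_R: "continuous_on {0..T} R"
  unfolding R_def[abs_def] by (intro continuous_on_sum continuous_on_mult continuous_on_const continuous_on_power cont_r) auto

lemma E_nonneg: "E t \<ge> 0"
  unfolding E_def using D by (intro sum_nonneg) simp

lemma energy_int:
  "\<delta>h / 2 * integral {0..T} A \<le> E 0 + Ch * Cb\<^sup>2 / 2 * integral {0..T} R"
proof -
  have ftc: "(E' has_integral (E T - E 0)) {0..T}"
    using T by (intro fundamental_theorem_of_calculus)
       (auto simp: has_real_derivative_iff_has_vector_derivative[symmetric] intro: E_deriv)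
  have iA: "(A has_integral integral {0..T} A) {0..T}" using cont_A
    by (intro integrable_integral integrable_continuous_interval)
  have iR: "(R has_integral integral {0..T} R) {0..T}" using cont_R
    by (intro integrable_integral integrable_continuous_interval)
  have "((\<lambda>t. \<delta>h / 2 * A t) has_integral \<delta>h / 2 * integral {0..T} A) {0..T}"
    by (rule has_integral_mult_right[OF iA])
  moreover have "((\<lambda>t. - E' t + Ch * Cb\<^sup>2 / 2 * R t) has_integral (- (E T - E 0) + Ch * Cb\<^sup>2 / 2 * integral {0..T} R)) {0..T}"
    by (intro has_integral_add has_integral_neg ftc has_integral_mult_right iR)
  ultimately have "\<delta>h / 2 * integral {0..T} A \<le> - (E T - E 0) + Ch * Cb\<^sup>2 / 2 * integral {0..T} R"
    by (rule has_integral_le) (rule pt_ineq)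
  then show ?thesis using E_nonneg[of T] by simp
qed

end

lemma cell_mem: "n \<ge> 1 \<Longrightarrow> x \<in> cell n i \<longleftrightarrow> real i - 1 \<le> x * n \<and> x * n < real i"
  by (auto simp: cell_def dx_def field_simps)

lemma cell_unique: assumes "n \<ge> 1" "x \<in> cell n i" "x \<in> cell n j" shows "i = j"
proof -
  have "real i - 1 \<le> x * n" "x * n < real i" "real j - 1 \<le> x * n" "x * n < real j"
    using assms cell_mem by auto
  then have "real i < real j + 1" "real j < real i + 1" by linarith+
  then show ?thesis by linarith
qed

lemma cell_sub: "n \<ge> 1 \<Longrightarrow> i \<in> {1..n} \<Longrightarrow> cell n i \<subseteq> {0..<1}"
proof
  fix x assume n: "n \<ge> 1" and i: "i \<in> {1..n}" and x: "x \<in> cell n i"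
  have "real i - 1 \<le> x * n" "x * n < real i" using cell_mem[OF n] x by auto
  moreover have "real i \<le> real n" "1 \<le> real i" using i by auto
  ultimately have "0 \<le> x * n" "x * n < real n" by linarith+
  then show "x \<in> {0..<1}" using n by (auto simp: zero_le_mult_iff)
qed

lemma cell_exists: assumes n: "n \<ge> 1" and x: "x \<in> {0..<1}" shows "\<exists>j\<in>{1..n}. x \<in> cell n j"
proof -
  define j where "j = nat \<lfloor>x * n\<rfloor> + 1"
  have fl: "real_of_int \<lfloor>x * n\<rfloor> \<le> x * n" "x * n < real_of_int \<lfloor>x * n\<rfloor> + 1" by linarith+
  have "0 \<le> x * n" using x by simp
  then have f0: "\<lfloor>x * n\<rfloor> \<ge> 0" by simp
  have rj: "real j = real_of_int \<lfloor>x * n\<rfloor> + 1" unfolding j_def using f0 by simp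
  have "x * n < real n" using x n by simp
  then have "\<lfloor>x * n\<rfloor> < int n" by (simp add: floor_less_iff)
  then have "nat \<lfloor>x * n\<rfloor> < n" using f0 by (simp add: nat_less_iff)
  then have "j \<le> n" unfolding j_def by linarith
  moreover have "x \<in> cell n j" using cell_mem[OF n] fl rj by simp
  ultimately show ?thesis unfolding j_def by auto
qed

lemma cell_sum_le: assumes n: "n \<ge> 1" and S: "S \<subseteq> {1..n}"
  shows "(\<Sum>i\<in>S. indicator (cell n i) x) \<le> (indicator {0..<1} x :: real)"
proof (cases "\<exists>i\<in>S. x \<in> cell n i")
  case True
  then obtain i where i: "i \<in> S" "x \<in> cell n i" by blast
  have fin: "finite S" using S finite_subset by blast
  have "(\<Sum>i\<in>S. indicator (cell n i) x) = indicator (cell n i) x + (\<Sum>j\<in>S - {i}. indicator (cell n j) x)"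
    using fin i by (simp add: sum.remove)
  also have "(\<Sum>j\<in>S - {i}. indicator (cell n j) x) = (0::real)"
    using cell_unique[OF n i(2)] by (intro sum.neutral) (auto simp: indicator_def)
  finally have "(\<Sum>i\<in>S. indicator (cell n i) x) = (1::real)" using i by simp
  moreover have "i \<in> {1..n}" using S i by auto
  then have "x \<in> {0..<1}" using cell_sub[OF n] i(2) by blast
  ultimately show ?thesis by simp
next
  case False
  then have "(\<Sum>i\<in>S. indicator (cell n i) x) = (0::real)" by (intro sum.neutral) auto
  then show ?thesis by simp
qed

lemma cell_meas[measurable]: "cell n i \<in> sets borel" by (simp add: cell_def)

lemma cell_emeasure: assumes n: "n \<ge> 1" shows "emeasure lborel (cell n i) = ennreal (dx n)"
proof -
  have D: "dx n > 0" using n by (simp add: dx_def)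
  have "(real i - 1) * dx n \<le> real i * dx n" using D by simp
  then have "emeasure lborel (cell n i) = ennreal (real i * dx n - (real i - 1) * dx n)"
    unfolding cell_def by (rule emeasure_lborel_Ico)
  then show ?thesis by (simp add: algebra_simps)
qed

lemma cell_avg_sq:
  assumes n: "n \<ge> 1" and gm: "g \<in> borel_measurable borel"
  shows "ennreal (dx n * (cell_avg n g i)\<^sup>2) \<le> (\<integral>\<^sup>+ x. ennreal (indicator (cell n i) x * (g x)\<^sup>2) \<partial>lborel)"
proof -
  have D: "dx n > 0" using n by (simp add: dx_def)
  have W: "(\<integral>\<^sup>+ x. ennreal (indicator (cell n i) x) \<partial>lborel) \<le> ennreal (dx n)"
    by (simp add: ennreal_indicator cell_emeasure[OF n])
  have cs: "ennreal ((\<integral>x. indicator (cell n i) x * g x \<partial>lborel)\<^sup>2) \<le> ennreal (dx n) * (\<integral>\<^sup>+ x. ennreal (indicator (cell n i) x * (g x)\<^sup>2) \<partial>lborel)"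
    by (rule wcs[OF _ gm _ W]) auto
  have "dx n * (cell_avg n g i)\<^sup>2 = (1 / dx n) * (\<integral>x. indicator (cell n i) x * g x \<partial>lborel)\<^sup>2"
    using D by (simp add: cell_avg_def power2_eq_square)
  then have "ennreal (dx n * (cell_avg n g i)\<^sup>2) = ennreal (1 / dx n) * ennreal ((\<integral>x. indicator (cell n i) x * g x \<partial>lborel)\<^sup>2)"
    using D by (subst ennreal_mult[symmetric]) auto
  also have "\<dots> \<le> ennreal (1 / dx n) * (ennreal (dx n) * (\<integral>\<^sup>+ x. ennreal (indicator (cell n i) x * (g x)\<^sup>2) \<partial>lborel))"
    by (rule mult_left_mono[OF cs]) simp
  also have "\<dots> = (\<integral>\<^sup>+ x. ennreal (indicator (cell n i) x * (g x)\<^sup>2) \<partial>lborel)"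
    using D by (simp add: ennreal_mult[symmetric] mult.assoc[symmetric])
  finally show ?thesis .
qed

lemma cells_sq:
  assumes n: "n \<ge> 1" and gm: "g \<in> borel_measurable borel" and S: "S \<subseteq> {1..n}"
  shows "ennreal (\<Sum>i\<in>S. dx n * (cell_avg n g i)\<^sup>2) \<le> (\<integral>\<^sup>+ x. ennreal (indicator {0..<1} x * (g x)\<^sup>2) \<partial>lborel)"
proof -
  have fin: "finite S" using S finite_subset by blast
  have "ennreal (\<Sum>i\<in>S. dx n * (cell_avg n g i)\<^sup>2) = (\<Sum>i\<in>S. ennreal (dx n * (cell_avg n g i)\<^sup>2))"
    using n by (intro sum_ennreal[symmetric]) (simp add: dx_def)
  also have "\<dots> \<le> (\<Sum>i\<in>S. (\<integral>\<^sup>+ x. ennreal (indicator (cell n i) x * (g x)\<^sup>2) \<partial>lborel))"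
    by (intro sum_mono cell_avg_sq n gm)
  also have "\<dots> = (\<integral>\<^sup>+ x. (\<Sum>i\<in>S. ennreal (indicator (cell n i) x * (g x)\<^sup>2)) \<partial>lborel)"
    using gm by (intro nn_integral_sum[symmetric]) measurable
  also have "\<dots> \<le> (\<integral>\<^sup>+ x. ennreal (indicator {0..<1} x * (g x)\<^sup>2) \<partial>lborel)"
  proof (intro nn_integral_mono)
    fix x
    have "(\<Sum>i\<in>S. ennreal (indicator (cell n i) x * (g x)\<^sup>2)) = ennreal (\<Sum>i\<in>S. indicator (cell n i) x * (g x)\<^sup>2)"
      by (intro sum_ennreal) simp
    also have "(\<Sum>i\<in>S. indicator (cell n i) x * (g x)\<^sup>2) = (\<Sum>i\<in>S. indicator (cell n i) x) * (g x)\<^sup>2"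
      by (simp add: sum_distrib_right)
    also have "\<dots> \<le> indicator {0..<1} x * (g x)\<^sup>2"
      by (intro mult_right_mono cell_sum_le n S) simp
    finally show "(\<Sum>i\<in>S. ennreal (indicator (cell n i) x * (g x)\<^sup>2)) \<le> ennreal (indicator {0..<1} x * (g x)\<^sup>2)"
      by (simp add: ennreal_leI)
  qed
  finally show ?thesis .
qed

lemma rho_meas: assumes [measurable]: "p \<in> borel_measurable borel" shows "rho_delta T p \<delta> \<in> borel_measurable borel"
  unfolding rho_delta_def[abs_def] by measurable

context scheme begin

lemma R_nonneg: "R t \<ge> 0" unfolding R_def using D by (intro sum_nonneg) simp
lemma A_nonneg: "A t \<ge> 0" unfolding A_def using D by (intro sum_nonneg) simp

lemma nn_int_cont:
  assumes "continuous_on {0..T} g" "\<And>t. g t \<ge> 0"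
  shows "(\<integral>\<^sup>+ t. ennreal (indicator {0..T} t * g t) \<partial>lborel) = ennreal (integral {0..T} g)"
  using assms by (intro nn_integral_has_integral_lebesgue integrable_integral integrable_continuous_interval) auto

lemma R_bound:
  assumes \<delta>: "\<delta> > 0" and pm: "p \<in> borel_measurable borel"
  shows "ennreal (integral {0..T} R) \<le> (\<integral>\<^sup>+ y. ennreal ((indicator (Qset T) y * p y)\<^sup>2) \<partial>lborel)"
proof -
  have "ennreal (integral {0..T} R) = (\<integral>\<^sup>+ t. ennreal (indicator {0..T} t * R t) \<partial>lborel)"
    by (rule nn_int_cont[symmetric, OF cont_R R_nonneg])
  also have "\<dots> \<le> (\<integral>\<^sup>+ t. (\<integral>\<^sup>+ \<xi>. ennreal ((rho_delta T p \<delta> (t, \<xi>))\<^sup>2) \<partial>lborel) \<partial>lborel)"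
  proof (intro nn_integral_mono)
    fix t
    show "ennreal (indicator {0..T} t * R t) \<le> (\<integral>\<^sup>+ \<xi>. ennreal ((rho_delta T p \<delta> (t, \<xi>))\<^sup>2) \<partial>lborel)"
    proof (cases "t \<in> {0..T}")
      case False then show ?thesis by simp
    next
      case True
      have "ennreal (R t) \<le> (\<integral>\<^sup>+ x. ennreal (indicator {0..<1} x * (rho_delta T p \<delta> (t, x))\<^sup>2) \<partial>lborel)"
      proof -
        have "(\<lambda>\<xi>. rho_delta T p \<delta> (t, \<xi>)) \<in> borel_measurable borel"
          using rho_meas[OF pm] by measurable
        then show ?thesis unfolding R_def r_def using n by (intro cells_sq) auto
      qed
      also have "\<dots> \<le> (\<integral>\<^sup>+ \<xi>. ennreal ((rho_delta T p \<delta> (t, \<xi>))\<^sup>2) \<partial>lborel)"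
        by (intro nn_integral_mono ennreal_leI) (auto simp: indicator_def)
      finally show ?thesis using True by simp
    qed
  qed
  also have "\<dots> = (\<integral>\<^sup>+ q. ennreal ((rho_delta T p \<delta> q)\<^sup>2) \<partial>lborel)"
  proof -
    have "(\<lambda>q. ennreal ((rho_delta T p \<delta> q)\<^sup>2)) \<in> borel_measurable (lborel \<Otimes>\<^sub>M lborel)"
      using rho_meas[OF pm] by (simp add: lborel_prod) measurable
    from lborel.nn_integral_fst[OF this] show ?thesis by (simp add: lborel_prod)
  qed
  also have "\<dots> \<le> (\<integral>\<^sup>+ y. ennreal ((indicator (Qset T) y * p y)\<^sup>2) \<partial>lborel)"
    by (rule rho_L2[OF \<delta> pm])
  finally show ?thesis .
qed

lemma h_sq: "(h u)\<^sup>2 \<le> 2 * (h 0)\<^sup>2 + 2 * Ch\<^sup>2 * u\<^sup>2"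
proof -
  obtain m where m: "\<delta>h \<le> m" "m \<le> Ch" "h u - h 0 = m * (u - 0)"
    using mvt_bounds[OF h1 hbd hlohi] by blast
  have hu: "h u = h 0 + m * u" using m(3) by simp
  have "(h 0 + m * u)\<^sup>2 \<le> 2 * (h 0)\<^sup>2 + 2 * (m * u)\<^sup>2"
    using sum_squares_ge_zero[of "h 0 - m * u" 0] by (simp add: power2_eq_square algebra_simps)
  moreover have "(m * u)\<^sup>2 \<le> Ch\<^sup>2 * u\<^sup>2"
    using m pos by (simp add: power_mult_distrib mult_right_mono power_mono)
  ultimately show ?thesis unfolding hu by linarith
qed

lemma E0_bound:
  assumes v0m: "v0 \<in> borel_measurable borel"
    and V2: "(\<integral>\<^sup>+ x. ennreal (indicator {0..<1} x * (v0 x)\<^sup>2) \<partial>lborel) \<le> ennreal V2" and V20: "V2 \<ge> 0"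
  shows "E 0 \<le> (h 0)\<^sup>2 + Ch\<^sup>2 * V2"
proof -
  define u where "u i = cell_avg n v0 i" for i
  have sumle: "(\<Sum>i=1..n. \<Delta> * (u i)\<^sup>2) \<le> V2"
  proof -
    have "ennreal (\<Sum>i=1..n. \<Delta> * (u i)\<^sup>2) \<le> ennreal V2"
      unfolding u_def using cells_sq[OF n v0m, of "{1..n}"] V2 by simp
    then show ?thesis using V20 by (simp add: ennreal_le_iff)
  qed
  have "E 0 = (\<Sum>i=1..n. \<Delta> * (h (u i))\<^sup>2 / 2)"
    unfolding E_def z_def u_def by (intro sum.cong refl) (simp add: solD(3))
  also have "\<dots> \<le> (\<Sum>i=1..n. \<Delta> * ((h 0)\<^sup>2 + Ch\<^sup>2 * (u i)\<^sup>2))"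
  proof (rule sum_mono)
    fix i
    have "(h (u i))\<^sup>2 / 2 \<le> (h 0)\<^sup>2 + Ch\<^sup>2 * (u i)\<^sup>2" using h_sq[of "u i"] by simp
    then have "\<Delta> * ((h (u i))\<^sup>2 / 2) \<le> \<Delta> * ((h 0)\<^sup>2 + Ch\<^sup>2 * (u i)\<^sup>2)"
      by (rule mult_left_mono) (use D in simp)
    then show "\<Delta> * (h (u i))\<^sup>2 / 2 \<le> \<Delta> * ((h 0)\<^sup>2 + Ch\<^sup>2 * (u i)\<^sup>2)" by simp
  qed
  also have "\<dots> = real n * \<Delta> * (h 0)\<^sup>2 + Ch\<^sup>2 * (\<Sum>i=1..n. \<Delta> * (u i)\<^sup>2)"
    by (simp add: sum.distrib sum_distrib_left algebra_simps)
  also have "real n * \<Delta> = 1" using n by (simp add: dx_def)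
  finally have "E 0 \<le> (h 0)\<^sup>2 + Ch\<^sup>2 * (\<Sum>i=1..n. \<Delta> * (u i)\<^sup>2)" by simp
  moreover have "Ch\<^sup>2 * (\<Sum>i=1..n. \<Delta> * (u i)\<^sup>2) \<le> Ch\<^sup>2 * V2"
    by (rule mult_left_mono[OF sumle]) simp
  ultimately show ?thesis by linarith
qed

end

lemma L2_L1:
  fixes g :: "real \<Rightarrow> real"
  assumes gm: "g \<in> borel_measurable borel" and i2: "integrable lborel (\<lambda>x. indicator {0<..<1} x * (g x)\<^sup>2)"
  shows "integrable lborel (\<lambda>x. indicator {0<..<1} x * g x)"
proof (rule Bochner_Integration.integrable_bound[where f="\<lambda>x. indicator {0<..<1} x + indicator {0<..<1} x * (g x)\<^sup>2"])
  show "integrable lborel (\<lambda>x. indicator {0<..<1} x + indicator {0<..<1} x * (g x)\<^sup>2)"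
    using i2 by (intro Bochner_Integration.integrable_add integrable_real_indicator) auto
  show "(\<lambda>x. indicator {0<..<1} x * g x) \<in> borel_measurable lborel" using gm by measurable
  show "AE x in lborel. norm (indicator {0<..<1} x * g x) \<le> norm (indicator {0<..<1} x + indicator {0<..<1} x * (g x)\<^sup>2)"
  proof (intro AE_I2)
    fix x
    have "\<bar>g x\<bar> \<le> 1 + (g x)\<^sup>2"
      using sum_squares_ge_zero[of "\<bar>g x\<bar> - 1/2" 0] by (simp add: power2_eq_square algebra_simps)
    then show "norm (indicator {0<..<1} x * g x) \<le> norm (indicator {0<..<1} x + indicator {0<..<1} x * (g x)\<^sup>2)"
      by (auto simp: indicator_def)
  qed
qed

lemma wcs_real:
  fixes w g :: "'a::euclidean_space \<Rightarrow> real"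
  assumes wm: "w \<in> borel_measurable borel" and gm: "g \<in> borel_measurable borel"
    and w0: "\<And>x. w x \<ge> 0" and W: "(\<integral>\<^sup>+ x. ennreal (w x) \<partial>lborel) \<le> ennreal W" and W0: "W \<ge> 0"
    and i: "integrable lborel (\<lambda>x. w x * (g x)\<^sup>2)"
  shows "(\<integral>x. w x * g x \<partial>lborel)\<^sup>2 \<le> W * (\<integral>x. w x * (g x)\<^sup>2 \<partial>lborel)"
proof -
  have "(\<integral>\<^sup>+ x. ennreal (w x * (g x)\<^sup>2) \<partial>lborel) = ennreal (\<integral>x. w x * (g x)\<^sup>2 \<partial>lborel)"
    using i w0 by (intro nn_integral_eq_integral) auto
  moreover have "(\<integral>x. w x * (g x)\<^sup>2 \<partial>lborel) \<ge> 0" using w0 by (intro integral_nonneg_AE AE_I2) simp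
  ultimately show ?thesis using wcs[OF wm gm w0 W] W0
    by (simp add: ennreal_mult[symmetric] ennreal_le_iff)
qed

lemma amgm:
  fixes x y lam d :: real
  assumes "lam > 0" "d > 0"
  shows "\<bar>x\<bar> * y \<le> lam / 2 * d * x\<^sup>2 + y\<^sup>2 / (2 * lam * d)"
proof -
  have "0 \<le> (lam * d * \<bar>x\<bar> - y)\<^sup>2" by simp
  then have "2 * (lam * d) * (\<bar>x\<bar> * y) \<le> (lam * d)\<^sup>2 * x\<^sup>2 + y\<^sup>2"
    by (simp add: power2_eq_square algebra_simps)
  then have "\<bar>x\<bar> * y \<le> ((lam * d)\<^sup>2 * x\<^sup>2 + y\<^sup>2) / (2 * (lam * d))"
    using assms by (simp add: field_simps)
  also have "\<dots> = lam / 2 * d * x\<^sup>2 + y\<^sup>2 / (2 * lam * d)"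
    using assms by (simp add: field_simps power2_eq_square)
  finally show ?thesis .
qed

lemma ind_sum2:
  assumes n: "n \<ge> 1"
  shows "(\<Sum>j\<in>{1..n-1}. indicator {(real j - 1) * dx n<..<(real j - 1) * dx n + 2 * dx n} x) \<le> (2 * indicator {0<..<1} x :: real)"
proof (cases "x \<in> {0<..<1}")
  case False
  have "indicator {(real j - 1) * dx n<..<(real j - 1) * dx n + 2 * dx n} x = (0::real)" if j: "j \<in> {1..n-1}" for j
  proof -
    have "(real j - 1) * dx n \<ge> 0" "(real j - 1) * dx n + 2 * dx n \<le> 1"
      using j n by (auto simp: dx_def field_simps)
    then show ?thesis using False by (auto simp: indicator_def)
  qed
  then show ?thesis by simp
next
  case True
  have le: "indicator {(real j - 1) * dx n<..<(real j - 1) * dx n + 2 * dx n} x \<le> indicator (cell n j) x + (indicator (cell n (j + 1)) x :: real)" for j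
    by (auto simp: indicator_def cell_def algebra_simps)
  have "(\<Sum>j\<in>{1..n-1}. indicator {(real j - 1) * dx n<..<(real j - 1) * dx n + 2 * dx n} x)
      \<le> (\<Sum>j\<in>{1..n-1}. indicator (cell n j) x + (indicator (cell n (j + 1)) x :: real))"
    by (intro sum_mono le)
  also have "\<dots> = (\<Sum>j\<in>{1..n-1}. indicator (cell n j) x) + (\<Sum>j\<in>Suc ` {1..n-1}. indicator (cell n j) x)"
  proof -
    have "(\<Sum>j\<in>Suc ` {1..n-1}. indicator (cell n j) x) = (\<Sum>j\<in>{1..n-1}. indicator (cell n (Suc j)) x :: real)"
      by (subst sum.reindex) auto
    then show ?thesis by (simp add: sum.distrib)
  qed
  also have "\<dots> \<le> indicator {0..<1} x + indicator {0..<1} x"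
    using n by (intro add_mono cell_sum_le) auto
  finally show ?thesis using True by (simp add: indicator_def)
qed

lemma real_choose:
  fixes X K N :: real
  assumes all: "\<And>lam. lam > 0 \<Longrightarrow> X \<le> lam / 2 * K + 2 / lam * N\<^sup>2" and K: "K > 0" and N: "N \<ge> 0"
  shows "X \<le> 2 * sqrt K * N"
proof (cases "N = 0")
  case True
  have "X \<le> e" if "e > 0" for e
  proof -
    have "X \<le> (2 * e / K) / 2 * K + 2 / (2 * e / K) * N\<^sup>2" using all[of "2 * e / K"] that K by simp
    then show ?thesis using True K by simp
  qed
  then have "X \<le> 0" by (metis dense not_le)
  then show ?thesis using True by simp
next
  case False
  then have Np: "N > 0" using N by simp
  define lam where "lam = 2 * N / sqrt K"
  have lp: "lam > 0" using Np K by (simp add: lam_def)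
  have sK: "sqrt K > 0" "sqrt K * sqrt K = K" using K by auto
  have "lam / 2 * K = N * sqrt K" unfolding lam_def using sK by (simp add: field_simps)
  moreover have "2 / lam * N\<^sup>2 = N * sqrt K" unfolding lam_def using sK Np by (simp add: field_simps power2_eq_square)
  ultimately show ?thesis using all[OF lp] by (simp add: mult_ac)
qed

context scheme begin

lemma vpc_eq: assumes "x \<in> cell n j" "j \<in> {1..n}" shows "vpc n v s x = v j s"
proof -
  have "vpc n v s x = (\<Sum>i\<in>{1..n}. indicator (cell n i) x * v i s)" by (simp only: vpc_def)
  also have "\<dots> = indicator (cell n j) x * v j s + (\<Sum>i\<in>{1..n} - {j}. indicator (cell n i) x * v i s)"
    by (rule sum.remove) (use assms(2) in auto)
  also have "(\<Sum>i\<in>{1..n} - {j}. indicator (cell n i) x * v i s) = 0"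
    using cell_unique[OF n assms(1)] by (intro sum.neutral) (auto simp: indicator_def)
  finally show ?thesis using assms(1) by simp
qed

lemma deriv_eq: assumes t: "t \<in> {0<..<T}" and x: "x \<in> cell n j" and j: "j \<in> {1..n}"
  shows "deriv (\<lambda>s. h (vpc n v s x)) t = h' (v j t) * vd j t"
proof -
  have "(\<lambda>s. h (vpc n v s x)) = (\<lambda>s. h (v j s))" using vpc_eq[OF x j] by simp
  moreover have "((\<lambda>s. h (v j s)) has_real_derivative h' (v j t) * vd j t) (at t)"
  proof -
    have ti: "t \<in> interior {0..T}" using t by simp
    have "((\<lambda>s. h (v j s)) has_real_derivative h' (v j t) * vd j t) (at t within {0..T})"
      using t by (intro DERIV_chain2[OF h1 solD(1)[OF j]]) auto
    then show ?thesis unfolding at_within_interior[OF ti] .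
  qed
  ultimately show ?thesis by (simp add: DERIV_imp_deriv)
qed

lemma I_eq:
  assumes t: "t \<in> {0<..<T}" and um: "u \<in> borel_measurable borel"
    and uI: "integrable lborel (\<lambda>x. indicator {0<..<1} x * u x)"
  shows "(\<integral>x. indicator {0<..<1} x * (deriv (\<lambda>s. h (vpc n v s x)) t * u x) \<partial>lborel)
       = (\<Sum>j\<in>{1..n}. (h' (v j t) * vd j t) * (\<integral>x. indicator {(real j - 1) * \<Delta><..<(real j - 1) * \<Delta> + \<Delta>} x * u x \<partial>lborel))"
proof -
  have pt: "indicator {0<..<1} x * (deriv (\<lambda>s. h (vpc n v s x)) t * u x)
      = (\<Sum>j\<in>{1..n}. (h' (v j t) * vd j t) * (indicator (cell n j) x * (indicator {0<..<1} x * u x)))" for x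
  proof (cases "x \<in> {0<..<1}")
    case False then show ?thesis by simp
  next
    case True
    then obtain j where j: "j \<in> {1..n}" "x \<in> cell n j" using cell_exists[OF n, of x] by auto
    have "(\<Sum>j\<in>{1..n}. (h' (v j t) * vd j t) * (indicator (cell n j) x * (indicator {0<..<1} x * u x)))
        = (h' (v j t) * vd j t) * (indicator (cell n j) x * (indicator {0<..<1} x * u x))
          + (\<Sum>i\<in>{1..n} - {j}. (h' (v i t) * vd i t) * (indicator (cell n i) x * (indicator {0<..<1} x * u x)))"
      using j by (simp add: sum.remove)
    also have "(\<Sum>i\<in>{1..n} - {j}. (h' (v i t) * vd i t) * (indicator (cell n i) x * (indicator {0<..<1} x * u x))) = 0"
      using cell_unique[OF n j(2)] by (intro sum.neutral) (auto simp: indicator_def)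
    finally show ?thesis using deriv_eq[OF t j(2,1)] True j by simp
  qed
  have int_j: "integrable lborel (\<lambda>x. indicator (cell n j) x * (indicator {0<..<1} x * u x))" for j
  proof (rule Bochner_Integration.integrable_bound[OF uI])
    show "(\<lambda>x. indicator (cell n j) x * (indicator {0<..<1} x * u x)) \<in> borel_measurable lborel" using um by measurable
    show "AE x in lborel. norm (indicator (cell n j) x * (indicator {0<..<1} x * u x)) \<le> norm (indicator {0<..<1} x * u x)"
      by (intro AE_I2) (auto simp: indicator_def)
  qed
  have E_j: "(\<integral>x. indicator (cell n j) x * (indicator {0<..<1} x * u x) \<partial>lborel)
      = (\<integral>x. indicator {(real j - 1) * \<Delta><..<(real j - 1) * \<Delta> + \<Delta>} x * u x \<partial>lborel)" if j: "j \<in> {1..n}" for j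
  proof (rule integral_cong_AE)
    show "(\<lambda>x. indicator (cell n j) x * (indicator {0<..<1} x * u x)) \<in> borel_measurable lborel" using um by measurable
    show "(\<lambda>x. indicator {(real j - 1) * \<Delta><..<(real j - 1) * \<Delta> + \<Delta>} x * u x) \<in> borel_measurable lborel" using um by measurable
    have a0: "(real j - 1) * \<Delta> \<ge> 0" and a1: "(real j - 1) * \<Delta> + \<Delta> \<le> 1" using j n by (auto simp: dx_def field_simps)
    show "AE x in lborel. indicator (cell n j) x * (indicator {0<..<1} x * u x) = indicator {(real j - 1) * \<Delta><..<(real j - 1) * \<Delta> + \<Delta>} x * u x"
      using AE_lborel_singleton[of "(real j - 1) * \<Delta>"]
    proof eventually_elim
      case (elim x)
      then show ?case using a0 a1 by (auto simp: indicator_def cell_def algebra_simps)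
    qed
  qed
  have "(\<integral>x. indicator {0<..<1} x * (deriv (\<lambda>s. h (vpc n v s x)) t * u x) \<partial>lborel)
      = (\<integral>x. (\<Sum>j\<in>{1..n}. (h' (v j t) * vd j t) * (indicator (cell n j) x * (indicator {0<..<1} x * u x))) \<partial>lborel)"
    by (simp only: pt)
  also have "\<dots> = (\<Sum>j\<in>{1..n}. (\<integral>x. (h' (v j t) * vd j t) * (indicator (cell n j) x * (indicator {0<..<1} x * u x)) \<partial>lborel))"
    by (rule Bochner_Integration.integral_sum) (use int_j in auto)
  also have "\<dots> = (\<Sum>j\<in>{1..n}. (h' (v j t) * vd j t) * (\<integral>x. indicator {(real j - 1) * \<Delta><..<(real j - 1) * \<Delta> + \<Delta>} x * u x \<partial>lborel))"
    by (intro sum.cong refl) (simp add: E_j)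
  finally show ?thesis .
qed

lemma sum_parts_I:
  assumes t: "t \<in> {0..T}"
  shows "(\<Sum>j\<in>{1..n}. (h' (v j t) * vd j t) * Ej j) = - (1 / \<Delta>) * (\<Sum>j=1..n-1. F j t * (Ej (j + 1) - Ej j))"
proof -
  have "(\<Sum>j\<in>{1..n}. (h' (v j t) * vd j t) * Ej j) = (\<Sum>j=1..n. (1 / \<Delta>) * (Ej j * (F j t - F (j - 1) t)))"
    using solD(4)[OF _ t] by (intro sum.cong refl) (simp add: field_simps)
  also have "\<dots> = (1 / \<Delta>) * (\<Sum>j=1..n. Ej j * (F j t - F (j - 1) t))"
    by (simp add: sum_distrib_left)
  also have "(\<Sum>j=1..n. Ej j * (F j t - F (j - 1) t)) = - (\<Sum>j=1..n-1. F j t * (Ej (j + 1) - Ej j))"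
    using sbp0[OF n, of "\<lambda>j. F j t" Ej] F0 Fn by simp
  finally show ?thesis by simp
qed

end

context scheme begin

lemma pt_I:
  assumes t: "t \<in> {0<..<T}" and wd: "weak_deriv01 u u'"
    and um: "u \<in> borel_measurable borel" and u'm: "u' \<in> borel_measurable borel"
    and ui2: "integrable lborel (\<lambda>x. indicator {0<..<1} x * (u x)\<^sup>2)"
    and u'i2: "integrable lborel (\<lambda>x. indicator {0<..<1} x * (u' x)\<^sup>2)"
    and lam: "lam > 0"
  shows "\<bar>\<integral>x. indicator {0<..<1} x * (deriv (\<lambda>s. h (vpc n v s x)) t * u x) \<partial>lborel\<bar>
         \<le> lam / 2 * A t + 2 / lam * (\<integral>x. indicator {0<..<1} x * (u' x)\<^sup>2 \<partial>lborel)"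
proof -
  have uI: "integrable lborel (\<lambda>x. indicator {0<..<1} x * u x)" by (rule L2_L1[OF um ui2])
  have u'I: "integrable lborel (\<lambda>x. indicator {0<..<1} x * u' x)" by (rule L2_L1[OF u'm u'i2])
  define a where "a j = (real j - 1) * \<Delta>" for j
  define Ej where "Ej j = (\<integral>x. indicator {(real j - 1) * \<Delta><..<(real j - 1) * \<Delta> + \<Delta>} x * u x \<partial>lborel)" for j
  define Y where "Y j = (\<integral>x. indicator {a j<..<a j + 2 * \<Delta>} x * \<bar>u' x\<bar> \<partial>lborel)" for j
  define Z where "Z j = (\<integral>x. indicator {a j<..<a j + 2 * \<Delta>} x * (u' x)\<^sup>2 \<partial>lborel)" for j
  define G where "G = (\<integral>x. indicator {0<..<1} x * (u' x)\<^sup>2 \<partial>lborel)"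
  have aj: "a j \<ge> 0" "a j + 2 * \<Delta> \<le> 1" if "j \<in> {1..n-1}" for j
    using that n by (auto simp: a_def dx_def field_simps)
  have I: "(\<integral>x. indicator {0<..<1} x * (deriv (\<lambda>s. h (vpc n v s x)) t * u x) \<partial>lborel)
      = - (1 / \<Delta>) * (\<Sum>j=1..n-1. F j t * (Ej (j + 1) - Ej j))"
    unfolding I_eq[OF t um uI] Ej_def[symmetric] using t by (intro sum_parts_I) auto
  have core_j: "\<bar>Ej j - Ej (j + 1)\<bar> \<le> \<Delta> * Y j" if j: "j \<in> {1..n-1}" for j
  proof -
    have e1: "Ej j = (\<integral>x. indicator {a j<..<a j + \<Delta>} x * u x \<partial>lborel)" by (simp add: Ej_def a_def)
    have e2: "Ej (j + 1) = (\<integral>x. indicator {a j + \<Delta><..<a j + 2 * \<Delta>} x * u x \<partial>lborel)"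
    proof -
      have 1: "(real (j + 1) - 1) * \<Delta> = a j + \<Delta>" and 2: "a j + \<Delta> + \<Delta> = a j + 2 * \<Delta>"
        by (simp_all add: a_def algebra_simps)
      show ?thesis unfolding Ej_def 1 2 ..
    qed
    show ?thesis unfolding e1 e2 Y_def
      by (rule core[OF wd um u'm uI u'I aj(1)[OF j] D aj(2)[OF j]])
  qed
  have intZ: "integrable lborel (\<lambda>x. indicator {a j<..<a j + 2 * \<Delta>} x * (u' x)\<^sup>2)" if j: "j \<in> {1..n-1}" for j
  proof (rule Bochner_Integration.integrable_bound[OF u'i2])
    show "(\<lambda>x. indicator {a j<..<a j + 2 * \<Delta>} x * (u' x)\<^sup>2) \<in> borel_measurable lborel" using u'm by measurable
    show "AE x in lborel. norm (indicator {a j<..<a j + 2 * \<Delta>} x * (u' x)\<^sup>2) \<le> norm (indicator {0<..<1} x * (u' x)\<^sup>2)"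
      using aj[OF j] by (intro AE_I2) (auto simp: indicator_def)
  qed
  have Ysq: "(Y j)\<^sup>2 \<le> 2 * \<Delta> * Z j" if j: "j \<in> {1..n-1}" for j
  proof -
    have W: "(\<integral>\<^sup>+ x. ennreal (indicator {a j<..<a j + 2 * \<Delta>} x) \<partial>lborel) \<le> ennreal (2 * \<Delta>)"
      using D by (simp add: ennreal_indicator)
    have "(\<integral>x. indicator {a j<..<a j + 2 * \<Delta>} x * \<bar>u' x\<bar> \<partial>lborel)\<^sup>2
        \<le> (2 * \<Delta>) * (\<integral>x. indicator {a j<..<a j + 2 * \<Delta>} x * (\<bar>u' x\<bar>)\<^sup>2 \<partial>lborel)"
      by (rule wcs_real[OF _ _ _ W]) (use u'm D intZ[OF j] in auto)
    then show ?thesis unfolding Y_def Z_def by simp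
  qed
  have sumZ: "(\<Sum>j=1..n-1. Z j) \<le> 2 * G"
  proof -
    have "(\<Sum>j=1..n-1. Z j) = (\<integral>x. (\<Sum>j=1..n-1. indicator {a j<..<a j + 2 * \<Delta>} x * (u' x)\<^sup>2) \<partial>lborel)"
      unfolding Z_def by (rule Bochner_Integration.integral_sum[symmetric]) (use intZ in auto)
    also have "\<dots> \<le> (\<integral>x. 2 * (indicator {0<..<1} x * (u' x)\<^sup>2) \<partial>lborel)"
    proof (rule integral_mono)
      show "integrable lborel (\<lambda>x. \<Sum>j=1..n-1. indicator {a j<..<a j + 2 * \<Delta>} x * (u' x)\<^sup>2)"
        by (rule Bochner_Integration.integrable_sum) (rule intZ)
      show "integrable lborel (\<lambda>x. 2 * (indicator {0<..<1} x * (u' x)\<^sup>2))" using u'i2 by auto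
      fix x
      have "(\<Sum>j=1..n-1. indicator {a j<..<a j + 2 * \<Delta>} x * (u' x)\<^sup>2)
          = (\<Sum>j=1..n-1. indicator {a j<..<a j + 2 * \<Delta>} x) * (u' x)\<^sup>2"
        by (simp add: sum_distrib_right)
      also have "\<dots> \<le> (2 * indicator {0<..<1} x) * (u' x)\<^sup>2"
        by (intro mult_right_mono) (use ind_sum2[OF n, of x] in \<open>simp_all add: a_def\<close>)
      finally show "(\<Sum>j=1..n-1. indicator {a j<..<a j + 2 * \<Delta>} x * (u' x)\<^sup>2) \<le> 2 * (indicator {0<..<1} x * (u' x)\<^sup>2)"
        by simp
    qed
    finally show ?thesis unfolding G_def by simp
  qed
  have "\<bar>- (1 / \<Delta>) * (\<Sum>j=1..n-1. F j t * (Ej (j + 1) - Ej j))\<bar>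
      = (1 / \<Delta>) * \<bar>\<Sum>j=1..n-1. F j t * (Ej (j + 1) - Ej j)\<bar>"
    using D by (simp add: abs_mult)
  also have "\<dots> \<le> (1 / \<Delta>) * (\<Sum>j=1..n-1. \<bar>F j t\<bar> * (\<Delta> * Y j))"
  proof (rule mult_left_mono)
    have "\<bar>\<Sum>j=1..n-1. F j t * (Ej (j + 1) - Ej j)\<bar> \<le> (\<Sum>j=1..n-1. \<bar>F j t * (Ej (j + 1) - Ej j)\<bar>)"
      by (rule sum_abs)
    also have "\<dots> \<le> (\<Sum>j=1..n-1. \<bar>F j t\<bar> * (\<Delta> * Y j))"
    proof (rule sum_mono)
      fix j assume j: "j \<in> {1..n-1}"
      have "\<bar>Ej (j + 1) - Ej j\<bar> \<le> \<Delta> * Y j" using core_j[OF j] by (simp add: abs_minus_commute)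
      then show "\<bar>F j t * (Ej (j + 1) - Ej j)\<bar> \<le> \<bar>F j t\<bar> * (\<Delta> * Y j)"
        by (simp add: abs_mult mult_left_mono)
    qed
    finally show "\<bar>\<Sum>j=1..n-1. F j t * (Ej (j + 1) - Ej j)\<bar> \<le> (\<Sum>j=1..n-1. \<bar>F j t\<bar> * (\<Delta> * Y j))" .
  qed (use D in simp)
  also have "\<dots> = (\<Sum>j=1..n-1. \<bar>F j t\<bar> * Y j)"
    using D by (simp add: sum_distrib_left)
  also have "\<dots> \<le> (\<Sum>j=1..n-1. lam / 2 * \<Delta> * (F j t)\<^sup>2 + (Y j)\<^sup>2 / (2 * lam * \<Delta>))"
    by (intro sum_mono amgm lam D)
  also have "\<dots> \<le> (\<Sum>j=1..n-1. lam / 2 * \<Delta> * (F j t)\<^sup>2 + Z j / lam)"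
  proof (rule sum_mono)
    fix j assume j: "j \<in> {1..n-1}"
    have "(Y j)\<^sup>2 / (2 * lam * \<Delta>) \<le> (2 * \<Delta> * Z j) / (2 * lam * \<Delta>)"
      using Ysq[OF j] lam D by (intro divide_right_mono) auto
    also have "\<dots> = Z j / lam" using lam D by (simp add: field_simps)
    finally show "lam / 2 * \<Delta> * (F j t)\<^sup>2 + (Y j)\<^sup>2 / (2 * lam * \<Delta>) \<le> lam / 2 * \<Delta> * (F j t)\<^sup>2 + Z j / lam"
      by simp
  qed
  also have "\<dots> = lam / 2 * A t + (\<Sum>j=1..n-1. Z j) / lam"
    unfolding A_def by (simp add: sum.distrib sum_distrib_left sum_divide_distrib algebra_simps)
  also have "\<dots> \<le> lam / 2 * A t + 2 / lam * G"
  proof -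
    have "(\<Sum>j=1..n-1. Z j) / lam \<le> (2 * G) / lam" using sumZ lam by (intro divide_right_mono) auto
    then show ?thesis by simp
  qed
  finally show ?thesis unfolding I G_def .
qed

end

lemma abs_int_le: "ennreal \<bar>\<integral>x. f x \<partial>M\<bar> \<le> (\<integral>\<^sup>+ x. ennreal \<bar>f x\<bar> \<partial>M)"
  for f :: "'a \<Rightarrow> real"
proof (cases "integrable M f")
  case True then show ?thesis using integral_norm_bound_ennreal[OF True] by simp
next
  case False then show ?thesis by (simp add: not_integrable_integral_eq)
qed

lemma tonelli2:
  assumes "g \<in> borel_measurable (borel :: (real \<times> real) measure)"
  shows "(\<integral>\<^sup>+ t. (\<integral>\<^sup>+ x. g (t, x) \<partial>lborel) \<partial>lborel) = (\<integral>\<^sup>+ q. g q \<partial>lborel)"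
proof -
  have "g \<in> borel_measurable (lborel \<Otimes>\<^sub>M lborel)" using assms by (simp add: lborel_prod)
  from lborel.nn_integral_fst[OF this] show ?thesis by (simp add: lborel_prod)
qed

context scheme begin

lemma A_bound:
  assumes \<delta>: "\<delta> > 0" and pm: "p \<in> borel_measurable borel" and v0m: "v0 \<in> borel_measurable borel"
    and V2: "(\<integral>\<^sup>+ x. ennreal (indicator {0..<1} x * (v0 x)\<^sup>2) \<partial>lborel) \<le> ennreal V2" and V20: "V2 \<ge> 0"
    and P2: "(\<integral>\<^sup>+ y. ennreal ((indicator (Qset T) y * p y)\<^sup>2) \<partial>lborel) \<le> ennreal P2" and P20: "P2 \<ge> 0"
  shows "(\<integral>\<^sup>+ t. ennreal (indicator {0..T} t * A t) \<partial>lborel) \<le> ennreal (2 / \<delta>h * ((h 0)\<^sup>2 + Ch\<^sup>2 * V2 + Ch * Cb\<^sup>2 / 2 * P2))"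
proof -
  have IR: "integral {0..T} R \<le> P2"
  proof -
    have "ennreal (integral {0..T} R) \<le> ennreal P2" using R_bound[OF \<delta> pm] P2 by (rule order_trans)
    then show ?thesis using P20 by (simp add: ennreal_le_iff)
  qed
  have "\<delta>h / 2 * integral {0..T} A \<le> E 0 + Ch * Cb\<^sup>2 / 2 * integral {0..T} R" by (rule energy_int)
  also have "\<dots> \<le> (h 0)\<^sup>2 + Ch\<^sup>2 * V2 + Ch * Cb\<^sup>2 / 2 * P2"
  proof -
    have "Ch * Cb\<^sup>2 / 2 * integral {0..T} R \<le> Ch * Cb\<^sup>2 / 2 * P2"
      using IR pos by (intro mult_left_mono) auto
    then show ?thesis using E0_bound[OF v0m V2 V20] by linarith
  qed
  finally have h: "\<delta>h / 2 * integral {0..T} A \<le> (h 0)\<^sup>2 + Ch\<^sup>2 * V2 + Ch * Cb\<^sup>2 / 2 * P2" .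
  have "integral {0..T} A = 2 / \<delta>h * (\<delta>h / 2 * integral {0..T} A)" using pos by simp
  also have "\<dots> \<le> 2 / \<delta>h * ((h 0)\<^sup>2 + Ch\<^sup>2 * V2 + Ch * Cb\<^sup>2 / 2 * P2)"
    using h pos by (intro mult_left_mono) auto
  finally have "integral {0..T} A \<le> 2 / \<delta>h * ((h 0)\<^sup>2 + Ch\<^sup>2 * V2 + Ch * Cb\<^sup>2 / 2 * P2)" .
  then show ?thesis unfolding nn_int_cont[OF cont_A A_nonneg] by (rule ennreal_leI)
qed

end

context scheme begin

lemma main_bound:
  assumes L: "in_L2X T \<eta> \<eta>x"
    and Ab: "(\<integral>\<^sup>+ t. ennreal (indicator {0..T} t * A t) \<partial>lborel) \<le> ennreal Kc" and Kc0: "Kc \<ge> 0"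
  shows "\<bar>\<integral>t. indicator {0<..<T} t * (\<integral>x. indicator {0<..<1} x * (deriv (\<lambda>s. h (vpc n v s x)) t * \<eta> (t, x)) \<partial>lborel) \<partial>lborel\<bar>
         \<le> 2 * sqrt (Kc + 1) * L2X_norm T \<eta> \<eta>x"
proof -
  from L have \<eta>m[measurable]: "\<eta> \<in> borel_measurable borel" and \<eta>xm[measurable]: "\<eta>x \<in> borel_measurable borel"
    and \<eta>2: "set_integrable lborel (Qset T) (\<lambda>q. (\<eta> q)\<^sup>2)" and \<eta>x2: "set_integrable lborel (Qset T) (\<lambda>q. (\<eta>x q)\<^sup>2)"
    and AEwd: "AE t in lborel. t \<in> {0<..<T} \<longrightarrow> weak_deriv01 (\<lambda>x. \<eta> (t, x)) (\<lambda>x. \<eta>x (t, x))"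
    unfolding in_L2X_def by auto
  define I where "I t = (\<integral>x. indicator {0<..<1} x * (deriv (\<lambda>s. h (vpc n v s x)) t * \<eta> (t, x)) \<partial>lborel)" for t
  define N2 where "N2 = (\<integral>q. indicator (Qset T) q * ((\<eta> q)\<^sup>2 + (\<eta>x q)\<^sup>2) \<partial>lborel)"
  have i1: "integrable lborel (\<lambda>q. indicator (Qset T) q * (\<eta> q)\<^sup>2)" using \<eta>2 by (simp add: set_integrable_def)
  have i2: "integrable lborel (\<lambda>q. indicator (Qset T) q * (\<eta>x q)\<^sup>2)" using \<eta>x2 by (simp add: set_integrable_def)
  have i12: "integrable lborel (\<lambda>q. indicator (Qset T) q * ((\<eta> q)\<^sup>2 + (\<eta>x q)\<^sup>2))"
    using Bochner_Integration.integrable_add[OF i1 i2] by (simp add: distrib_left)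
  have N20: "N2 \<ge> 0" unfolding N2_def by (intro integral_nonneg_AE AE_I2) simp
  have Lnorm: "L2X_norm T \<eta> \<eta>x = sqrt N2" by (simp add: L2X_norm_def N2_def)
  have nnQ: "(\<integral>\<^sup>+ q. ennreal (indicator (Qset T) q * (\<eta>x q)\<^sup>2) \<partial>lborel) \<le> ennreal N2"
  proof -
    have "(\<integral>\<^sup>+ q. ennreal (indicator (Qset T) q * (\<eta>x q)\<^sup>2) \<partial>lborel)
        \<le> (\<integral>\<^sup>+ q. ennreal (indicator (Qset T) q * ((\<eta> q)\<^sup>2 + (\<eta>x q)\<^sup>2)) \<partial>lborel)"
      by (intro nn_integral_mono ennreal_leI) (auto simp: indicator_def)
    also have "\<dots> = ennreal N2" unfolding N2_def using i12 by (intro nn_integral_eq_integral) auto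
    finally show ?thesis .
  qed
  have fin: "AE t in lborel. (\<integral>\<^sup>+ x. ennreal (indicator (Qset T) (t, x) * (g (t, x))\<^sup>2) \<partial>lborel) \<noteq> \<infinity>"
    if gm[measurable]: "g \<in> borel_measurable borel" and gi: "integrable lborel (\<lambda>q. indicator (Qset T) q * (g q)\<^sup>2)" for g
  proof (rule nn_integral_PInf_AE)
    show "(\<lambda>t. \<integral>\<^sup>+ x. ennreal (indicator (Qset T) (t, x) * (g (t, x))\<^sup>2) \<partial>lborel) \<in> borel_measurable lborel"
      by measurable
    have "(\<integral>\<^sup>+ t. (\<integral>\<^sup>+ x. ennreal (indicator (Qset T) (t, x) * (g (t, x))\<^sup>2) \<partial>lborel) \<partial>lborel)
        = (\<integral>\<^sup>+ q. ennreal (indicator (Qset T) q * (g q)\<^sup>2) \<partial>lborel)"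
      by (rule tonelli2) measurable
    also have "\<dots> = ennreal (\<integral>q. indicator (Qset T) q * (g q)\<^sup>2 \<partial>lborel)"
      using gi by (intro nn_integral_eq_integral) auto
    finally show "(\<integral>\<^sup>+ t. (\<integral>\<^sup>+ x. ennreal (indicator (Qset T) (t, x) * (g (t, x))\<^sup>2) \<partial>lborel) \<partial>lborel) \<noteq> \<infinity>"
      by simp
  qed
  have Qi: "indicator (Qset T) (t, x) = (indicator {0<..<1} x :: real)" if "t \<in> {0<..<T}" for t x
    using that by (simp add: Qset_def indicator_def)
  have fin_int: "integrable lborel (\<lambda>x. indicator {0<..<1} x * (g (t, x))\<^sup>2)"
    if gm[measurable]: "g \<in> borel_measurable borel" and t: "t \<in> {0<..<T}"
      and f: "(\<integral>\<^sup>+ x. ennreal (indicator (Qset T) (t, x) * (g (t, x))\<^sup>2) \<partial>lborel) \<noteq> \<infinity>" for g t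
  proof (rule integrableI_bounded)
    show "(\<lambda>x. indicator {0<..<1} x * (g (t, x))\<^sup>2) \<in> borel_measurable lborel" by measurable
    show "(\<integral>\<^sup>+ x. ennreal (norm (indicator {0<..<1} x * (g (t, x))\<^sup>2)) \<partial>lborel) < \<infinity>"
      using f Qi[OF t] by (simp add: top.not_eq_extremum)
  qed
  have good: "AE t in lborel. t \<in> {0<..<T} \<longrightarrow> weak_deriv01 (\<lambda>x. \<eta> (t, x)) (\<lambda>x. \<eta>x (t, x))
      \<and> integrable lborel (\<lambda>x. indicator {0<..<1} x * (\<eta> (t, x))\<^sup>2)
      \<and> integrable lborel (\<lambda>x. indicator {0<..<1} x * (\<eta>x (t, x))\<^sup>2)"
    using AEwd fin[OF \<eta>m i1] fin[OF \<eta>xm i2]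
    by eventually_elim (use fin_int[OF \<eta>m] fin_int[OF \<eta>xm] in blast)
  have bnd: "\<bar>\<integral>t. indicator {0<..<T} t * I t \<partial>lborel\<bar> \<le> lam / 2 * Kc + 2 / lam * N2" if lam: "lam > 0" for lam
  proof -
    have AEb: "AE t in lborel. ennreal \<bar>indicator {0<..<T} t * I t\<bar>
        \<le> ennreal (lam / 2) * ennreal (indicator {0..T} t * A t)
          + ennreal (2 / lam) * (\<integral>\<^sup>+ x. ennreal (indicator (Qset T) (t, x) * (\<eta>x (t, x))\<^sup>2) \<partial>lborel)"
      using good
    proof eventually_elim
      case (elim t)
      show ?case
      proof (cases "t \<in> {0<..<T}")
        case False then show ?thesis by simp
      next
        case True
        with elim have wd: "weak_deriv01 (\<lambda>x. \<eta> (t, x)) (\<lambda>x. \<eta>x (t, x))"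
          and int1: "integrable lborel (\<lambda>x. indicator {0<..<1} x * (\<eta> (t, x))\<^sup>2)"
          and int2: "integrable lborel (\<lambda>x. indicator {0<..<1} x * (\<eta>x (t, x))\<^sup>2)" by auto
        define G where "G = (\<integral>x. indicator {0<..<1} x * (\<eta>x (t, x))\<^sup>2 \<partial>lborel)"
        have G0: "G \<ge> 0" unfolding G_def by (intro integral_nonneg_AE AE_I2) simp
        have pt: "\<bar>I t\<bar> \<le> lam / 2 * A t + 2 / lam * G"
          unfolding I_def G_def
          by (rule pt_I[OF True wd _ _ int1 int2 lam]) measurable
        have Gnn: "(\<integral>\<^sup>+ x. ennreal (indicator (Qset T) (t, x) * (\<eta>x (t, x))\<^sup>2) \<partial>lborel) = ennreal G"
          unfolding G_def Qi[OF True] using int2 by (intro nn_integral_eq_integral) auto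
        have "ennreal \<bar>indicator {0<..<T} t * I t\<bar> = ennreal \<bar>I t\<bar>" using True by simp
        also have "\<dots> \<le> ennreal (lam / 2 * A t + 2 / lam * G)" using pt by (rule ennreal_leI)
        also have "\<dots> = ennreal (lam / 2 * A t) + ennreal (2 / lam * G)"
          by (rule ennreal_plus) (use lam G0 A_nonneg[of t] in auto)
        also have "\<dots> = ennreal (lam / 2) * ennreal (A t) + ennreal (2 / lam) * ennreal G"
        proof -
          have m1: "ennreal (lam / 2 * A t) = ennreal (lam / 2) * ennreal (A t)"
            by (rule ennreal_mult) (use lam A_nonneg[of t] in auto)
          have m2: "ennreal (2 / lam * G) = ennreal (2 / lam) * ennreal G"
            by (rule ennreal_mult) (use lam G0 in auto)
          show ?thesis unfolding m1 m2 ..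
        qed
        finally show ?thesis using True Gnn by simp
      qed
    qed
    have Am[measurable]: "(\<lambda>t. indicator {0..T} t * A t) \<in> borel_measurable borel"
      using borel_measurable_continuous_on_indicator[OF _ cont_A] by simp
    have f1: "(\<lambda>t. ennreal (indicator {0..T} t * A t)) \<in> borel_measurable lborel" by measurable
    have f2: "(\<lambda>t. \<integral>\<^sup>+ x. ennreal (indicator (Qset T) (t, x) * (\<eta>x (t, x))\<^sup>2) \<partial>lborel) \<in> borel_measurable lborel"
      by measurable
    have m1: "(\<lambda>t. ennreal (lam / 2) * ennreal (indicator {0..T} t * A t)) \<in> borel_measurable lborel"
      using f1 by measurable
    have m2: "(\<lambda>t. ennreal (2 / lam) * (\<integral>\<^sup>+ x. ennreal (indicator (Qset T) (t, x) * (\<eta>x (t, x))\<^sup>2) \<partial>lborel)) \<in> borel_measurable lborel"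
      using f2 by measurable
    have "ennreal \<bar>\<integral>t. indicator {0<..<T} t * I t \<partial>lborel\<bar> \<le> (\<integral>\<^sup>+ t. ennreal \<bar>indicator {0<..<T} t * I t\<bar> \<partial>lborel)"
      by (rule abs_int_le)
    also have "\<dots> \<le> (\<integral>\<^sup>+ t. ennreal (lam / 2) * ennreal (indicator {0..T} t * A t)
          + ennreal (2 / lam) * (\<integral>\<^sup>+ x. ennreal (indicator (Qset T) (t, x) * (\<eta>x (t, x))\<^sup>2) \<partial>lborel) \<partial>lborel)"
      by (rule nn_integral_mono_AE[OF AEb])
    also have "\<dots> = (\<integral>\<^sup>+ t. ennreal (lam / 2) * ennreal (indicator {0..T} t * A t) \<partial>lborel)
          + (\<integral>\<^sup>+ t. ennreal (2 / lam) * (\<integral>\<^sup>+ x. ennreal (indicator (Qset T) (t, x) * (\<eta>x (t, x))\<^sup>2) \<partial>lborel) \<partial>lborel)"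
      by (rule nn_integral_add[OF m1 m2])
    also have "\<dots> = ennreal (lam / 2) * (\<integral>\<^sup>+ t. ennreal (indicator {0..T} t * A t) \<partial>lborel)
          + ennreal (2 / lam) * (\<integral>\<^sup>+ t. (\<integral>\<^sup>+ x. ennreal (indicator (Qset T) (t, x) * (\<eta>x (t, x))\<^sup>2) \<partial>lborel) \<partial>lborel)"
      by (simp only: nn_integral_cmult[OF f1] nn_integral_cmult[OF f2])
    also have "\<dots> \<le> ennreal (lam / 2) * ennreal Kc + ennreal (2 / lam) * ennreal N2"
    proof (intro add_mono mult_left_mono Ab)
      show "(\<integral>\<^sup>+ t. (\<integral>\<^sup>+ x. ennreal (indicator (Qset T) (t, x) * (\<eta>x (t, x))\<^sup>2) \<partial>lborel) \<partial>lborel) \<le> ennreal N2"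
      proof -
        have "(\<integral>\<^sup>+ t. (\<integral>\<^sup>+ x. ennreal (indicator (Qset T) (t, x) * (\<eta>x (t, x))\<^sup>2) \<partial>lborel) \<partial>lborel)
            = (\<integral>\<^sup>+ q. ennreal (indicator (Qset T) q * (\<eta>x q)\<^sup>2) \<partial>lborel)"
          by (rule tonelli2) measurable
        then show ?thesis using nnQ by simp
      qed
    qed auto
    also have "\<dots> = ennreal (lam / 2 * Kc) + ennreal (2 / lam * N2)"
    proof -
      have m1: "ennreal (lam / 2 * Kc) = ennreal (lam / 2) * ennreal Kc"
        by (rule ennreal_mult) (use lam Kc0 in auto)
      have m2: "ennreal (2 / lam * N2) = ennreal (2 / lam) * ennreal N2"
        by (rule ennreal_mult) (use lam N20 in auto)
      show ?thesis unfolding m1 m2 ..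
    qed
    also have "\<dots> = ennreal (lam / 2 * Kc + 2 / lam * N2)"
      by (rule ennreal_plus[symmetric]) (use lam Kc0 N20 in auto)
    finally show ?thesis using lam Kc0 N20 by (subst (asm) ennreal_le_iff) auto
  qed
  have "\<bar>\<integral>t. indicator {0<..<T} t * I t \<partial>lborel\<bar> \<le> 2 * sqrt (Kc + 1) * sqrt N2"
  proof (rule real_choose)
    fix lam :: real assume lam: "lam > 0"
    have "lam / 2 * Kc \<le> lam / 2 * (Kc + 1)" using lam by simp
    then show "\<bar>\<integral>t. indicator {0<..<T} t * I t \<partial>lborel\<bar> \<le> lam / 2 * (Kc + 1) + 2 / lam * (sqrt N2)\<^sup>2"
      using bnd[OF lam] N20 by simp
  qed (use Kc0 N20 in auto)
  then show ?thesis unfolding Lnorm I_def .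
qed

end

theorem lemma4p2:
  fixes T \<delta>h Ch \<delta>b Cb :: real
    and h h' h'' b b' b'' v0 :: "real \<Rightarrow> real"
    and p :: "real \<times> real \<Rightarrow> real"
  assumes T: "T > 0"
    and pos: "\<delta>h > 0" "Ch > 0" "\<delta>b > 0" "Cb > 0"
    and h1: "\<And>u. (h has_real_derivative h' u) (at u)"
    and h2: "\<And>u. (h' has_real_derivative h'' u) (at u)"
    and h2c: "continuous_on UNIV h''"
    and hbd: "\<And>u. \<delta>h \<le> h' u \<and> h' u \<le> Ch" "\<And>u. \<bar>h'' u\<bar> \<le> Ch"
    and b1: "\<And>u. (b has_real_derivative b' u) (at u)"
    and b2: "\<And>u. (b' has_real_derivative b'' u) (at u)"
    and b2c: "continuous_on UNIV b''"
    and bbd: "\<And>u. \<delta>b \<le> b u \<and> b u \<le> Cb" "\<And>u. \<bar>b' u\<bar> \<le> Cb" "\<And>u. \<bar>b'' u\<bar> \<le> Cb"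
    and p: "p \<in> borel_measurable borel" "set_integrable lborel (Qset T) (\<lambda>q. (p q)\<^sup>2)"
    and v0: "v0 \<in> borel_measurable borel" "set_integrable lborel {0<..<1} (\<lambda>x. (v0 x)\<^sup>2)"
  shows "\<exists>C17 > 0. \<forall>n::nat. \<forall>\<delta>::real. \<forall>v vd.
           n \<ge> 1 \<and> \<delta> > 0 \<and> is_scheme_solution T h' b p v0 n \<delta> v vd \<longrightarrow>
           (\<forall>\<eta> \<eta>x. in_L2X T \<eta> \<eta>x \<longrightarrow>
              \<bar>\<integral>t. indicator {0<..<T} t *
                   (\<integral>x. indicator {0<..<1} x *
                        (deriv (\<lambda>s. h (vpc n v s x)) t * \<eta> (t, x)) \<partial>lborel) \<partial>lborel\<bar>
              \<le> C17 * L2X_norm T \<eta> \<eta>x)"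
proof -
  define V2 where "V2 = (\<integral>x. indicator {0<..<1} x * (v0 x)\<^sup>2 \<partial>lborel)"
  define P2 where "P2 = (\<integral>y. indicator (Qset T) y * (p y)\<^sup>2 \<partial>lborel)"
  have V20: "V2 \<ge> 0" unfolding V2_def by (intro integral_nonneg_AE AE_I2) simp
  have P20: "P2 \<ge> 0" unfolding P2_def by (intro integral_nonneg_AE AE_I2) simp
  have iv0: "integrable lborel (\<lambda>x. indicator {0<..<1} x * (v0 x)\<^sup>2)"
    using v0(2) by (simp add: set_integrable_def)
  have ip: "integrable lborel (\<lambda>y. indicator (Qset T) y * (p y)\<^sup>2)"
    using p(2) by (simp add: set_integrable_def)
  have V2nn: "(\<integral>\<^sup>+ x. ennreal (indicator {0..<1} x * (v0 x)\<^sup>2) \<partial>lborel) \<le> ennreal V2"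
  proof -
    have "(\<integral>\<^sup>+ x. ennreal (indicator {0..<1} x * (v0 x)\<^sup>2) \<partial>lborel)
        = (\<integral>\<^sup>+ x. ennreal (indicator {0<..<1} x * (v0 x)\<^sup>2) \<partial>lborel)"
    proof (rule nn_integral_cong_AE)
      show "AE x in lborel. ennreal (indicator {0..<1} x * (v0 x)\<^sup>2) = ennreal (indicator {0<..<1} x * (v0 x)\<^sup>2)"
        using AE_lborel_singleton[of 0] by eventually_elim (auto simp: indicator_def)
    qed
    also have "\<dots> = ennreal V2" unfolding V2_def using iv0 by (intro nn_integral_eq_integral) auto
    finally show ?thesis by simp
  qed
  have P2nn: "(\<integral>\<^sup>+ y. ennreal ((indicator (Qset T) y * p y)\<^sup>2) \<partial>lborel) \<le> ennreal P2"
  proof -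
    have "(\<integral>\<^sup>+ y. ennreal ((indicator (Qset T) y * p y)\<^sup>2) \<partial>lborel)
        = (\<integral>\<^sup>+ y. ennreal (indicator (Qset T) y * (p y)\<^sup>2) \<partial>lborel)"
      by (intro nn_integral_cong) (auto simp: indicator_def power_mult_distrib)
    also have "\<dots> = ennreal P2" unfolding P2_def using ip by (intro nn_integral_eq_integral) auto
    finally show ?thesis by simp
  qed
  define Kc where "Kc = 2 / \<delta>h * ((h 0)\<^sup>2 + Ch\<^sup>2 * V2 + Ch * Cb\<^sup>2 / 2 * P2)"
  have Kc0: "Kc \<ge> 0" unfolding Kc_def using pos V20 P20 by (intro mult_nonneg_nonneg add_nonneg_nonneg) auto
  have bc: "continuous_on UNIV b"
    using b1 by (intro DERIV_continuous_on) (auto intro: has_field_derivative_at_within)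
  show ?thesis
  proof (intro exI[of _ "2 * sqrt (Kc + 1)"] conjI allI impI)
    show "2 * sqrt (Kc + 1) > 0" using Kc0 by simp
    fix n :: nat and \<delta> :: real and v vd \<eta> \<eta>x
    assume H: "1 \<le> n \<and> 0 < \<delta> \<and> is_scheme_solution T h' b p v0 n \<delta> v vd"
      and L: "in_L2X T \<eta> \<eta>x"
    interpret S: scheme T \<delta>h Ch \<delta>b Cb h h' h'' b p v0 n \<delta> v vd
      using T pos h1 h2 hbd(1) bc bbd(1) H by unfold_locales auto
    have Ab: "(\<integral>\<^sup>+ t. ennreal (indicator {0..T} t * S.A t) \<partial>lborel) \<le> ennreal Kc"
      unfolding Kc_def using H by (intro S.A_bound V2nn V20 P2nn P20 p(1) v0(1)) auto
    show "\<bar>\<integral>t. indicator {0<..<T} t * (\<integral>x. indicator {0<..<1} x * (deriv (\<lambda>s. h (vpc n v s x)) t * \<eta> (t, x)) \<partial>lborel) \<partial>lborel\<bar>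
         \<le> 2 * sqrt (Kc + 1) * L2X_norm T \<eta> \<eta>x"
      by (rule S.main_bound[OF L Ab Kc0])
  qed
qed

end
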